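(* Let $S$ be a (von Neumann) regular semigroup with finitely many left ideals and finitely many right ideals. If every maximal subgroup of $S$ is defined by a finite complete rewriting system, then $S$ is also defined by a finite complete rewriting system.
   Context: A semigroup $S$ is (von Neumann) regular if for every $x\in S$ there is $y\in S$ with $xyx=x$. A rewriting system (presentation) $\langle X\mid R\rangle$ consists of an alphabet $X$ and a set $R$ of rules $u\to v$ with $u,v$ words over $X$; it is finite if $X$ and $R$ are finite. The single-step reduction $\to_R$ is given by $w_1uw_2\to_R w_1vw_2$ for $(u\to v)\in R$; $\to_R^*$ is its reflexive transitive closure. The system is noetherian if there is no infinite chain $w_1\to_R w_2\to_R\cdots$, confluent if whenever $u\to_R^* v$ and $u\to_R^* v'$ there is $w$ with $v\to_R^* w$ and $v'\to_R^* w$, and complete if it is both. A semigroup is defined by $\langle X\mid R\rangle$ if it is isomorphic to the quotient of the free semigroup $X^+$ by the congruence generated by $R$. (Being defined by a finite complete semigroup presentation is equivalent, for monoids, to being defined by a finite complete monoid presentation, so no ambiguity arises.) *)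

theory Defs
  imports Main
begin

definition semigroup_on :: "'a set \<Rightarrow> ('a \<Rightarrow> 'a \<Rightarrow> 'a) \<Rightarrow> bool" where
  "semigroup_on S f \<longleftrightarrow> (\<forall>x\<in>S. \<forall>y\<in>S. f x y \<in> S) \<and>
     (\<forall>x\<in>S. \<forall>y\<in>S. \<forall>z\<in>S. f (f x y) z = f x (f y z))"

definition regular_semigroup :: "'a set \<Rightarrow> ('a \<Rightarrow> 'a \<Rightarrow> 'a) \<Rightarrow> bool" where
  "regular_semigroup S f \<longleftrightarrow> semigroup_on S f \<and> (\<forall>x\<in>S. \<exists>y\<in>S. f (f x y) x = x)"

definition left_ideal :: "'a set \<Rightarrow> ('a \<Rightarrow> 'a \<Rightarrow> 'a) \<Rightarrow> 'a set \<Rightarrow> bool" where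
  "left_ideal S f I \<longleftrightarrow> I \<subseteq> S \<and> I \<noteq> {} \<and> (\<forall>s\<in>S. \<forall>x\<in>I. f s x \<in> I)"

definition right_ideal :: "'a set \<Rightarrow> ('a \<Rightarrow> 'a \<Rightarrow> 'a) \<Rightarrow> 'a set \<Rightarrow> bool" where
  "right_ideal S f I \<longleftrightarrow> I \<subseteq> S \<and> I \<noteq> {} \<and> (\<forall>s\<in>S. \<forall>x\<in>I. f x s \<in> I)"

definition subgroup_of :: "'a set \<Rightarrow> ('a \<Rightarrow> 'a \<Rightarrow> 'a) \<Rightarrow> 'a set \<Rightarrow> bool" where
  "subgroup_of S f H \<longleftrightarrow> H \<subseteq> S \<and> H \<noteq> {} \<and> (\<forall>x\<in>H. \<forall>y\<in>H. f x y \<in> H) \<and>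
     (\<exists>e\<in>H. (\<forall>x\<in>H. f e x = x \<and> f x e = x) \<and> (\<forall>x\<in>H. \<exists>y\<in>H. f x y = e \<and> f y x = e))"

definition maximal_subgroup :: "'a set \<Rightarrow> ('a \<Rightarrow> 'a \<Rightarrow> 'a) \<Rightarrow> 'a set \<Rightarrow> bool" where
  "maximal_subgroup S f H \<longleftrightarrow> subgroup_of S f H \<and>
     (\<forall>K. subgroup_of S f K \<and> H \<subseteq> K \<longrightarrow> K = H)"

text \<open>Rewriting systems over an alphabet X (letters are natural numbers, w.l.o.g.);
  words are nonempty lists over X; R is a set of rules (u, v).\<close>

definition rw_step :: "nat set \<Rightarrow> (nat list \<times> nat list) set \<Rightarrow> (nat list \<times> nat list) set" where
  "rw_step X R = {(w1 @ u @ w2, w1 @ v @ w2) | w1 u v w2.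
      (u, v) \<in> R \<and> w1 \<in> lists X \<and> w2 \<in> lists X}"

definition rw_noetherian :: "nat set \<Rightarrow> (nat list \<times> nat list) set \<Rightarrow> bool" where
  "rw_noetherian X R \<longleftrightarrow> \<not> (\<exists>c :: nat \<Rightarrow> nat list. \<forall>i. (c i, c (Suc i)) \<in> rw_step X R)"

definition rw_confluent :: "nat set \<Rightarrow> (nat list \<times> nat list) set \<Rightarrow> bool" where
  "rw_confluent X R \<longleftrightarrow> (\<forall>u v v'. (u, v) \<in> (rw_step X R)\<^sup>* \<and> (u, v') \<in> (rw_step X R)\<^sup>* \<longrightarrow>
      (\<exists>w. (v, w) \<in> (rw_step X R)\<^sup>* \<and> (v', w) \<in> (rw_step X R)\<^sup>*))"

definition finite_complete_rws :: "nat set \<Rightarrow> (nat list \<times> nat list) set \<Rightarrow> bool" where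
  "finite_complete_rws X R \<longleftrightarrow> finite X \<and> finite R \<and>
     (\<forall>(u, v)\<in>R. u \<in> lists X \<and> u \<noteq> [] \<and> v \<in> lists X \<and> v \<noteq> []) \<and>
     rw_noetherian X R \<and> rw_confluent X R"

text \<open>\<langle>X | R\<rangle> defines (S, f): S is isomorphic to X^+ modulo the congruence generated by R,
  expressed as a surjective homomorphism \<psi> : X^+ -> S whose kernel is exactly that congruence.\<close>

definition presents :: "nat set \<Rightarrow> (nat list \<times> nat list) set \<Rightarrow> 'a set \<Rightarrow> ('a \<Rightarrow> 'a \<Rightarrow> 'a) \<Rightarrow> bool" where
  "presents X R S f \<longleftrightarrow> (\<exists>\<psi> :: nat list \<Rightarrow> 'a.
     (\<forall>w\<in>lists X - {[]}. \<psi> w \<in> S) \<and>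
     (\<forall>w1\<in>lists X - {[]}. \<forall>w2\<in>lists X - {[]}. \<psi> (w1 @ w2) = f (\<psi> w1) (\<psi> w2)) \<and>
     S \<subseteq> \<psi> ` (lists X - {[]}) \<and>
     (\<forall>w1\<in>lists X - {[]}. \<forall>w2\<in>lists X - {[]}.
        \<psi> w1 = \<psi> w2 \<longleftrightarrow> (w1, w2) \<in> (rw_step X R \<union> (rw_step X R)\<inverse>)\<^sup>*))"

definition has_finite_complete_presentation :: "'a set \<Rightarrow> ('a \<Rightarrow> 'a \<Rightarrow> 'a) \<Rightarrow> bool" where
  "has_finite_complete_presentation S f \<longleftrightarrow>
     (\<exists>X R. finite_complete_rws X R \<and> presents X R S f)"

end

theory Submission
  imports Defs "HOL-Library.Multiset" "HOL-Library.Infinite_Set"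
begin


lemma rw_step_ctx:
  assumes "(x, y) \<in> rw_step X R" "a \<in> lists X" "b \<in> lists X"
  shows "(a @ x @ b, a @ y @ b) \<in> rw_step X R"
proof -
  from assms(1) obtain w1 u v w2 where "x = w1 @ u @ w2" "y = w1 @ v @ w2" "(u, v) \<in> R"
    "w1 \<in> lists X" "w2 \<in> lists X" unfolding rw_step_def by blast
  then show ?thesis unfolding rw_step_def using assms(2,3)
    by (rule_tac CollectI, rule_tac x="a @ w1" in exI, rule_tac x=u in exI, rule_tac x=v in exI,
        rule_tac x="w2 @ b" in exI) auto
qed

definition rules_ok :: "nat set \<Rightarrow> (nat list \<times> nat list) set \<Rightarrow> bool" where
  "rules_ok X R \<longleftrightarrow> (\<forall>(u, v)\<in>R. u \<in> lists X \<and> u \<noteq> [] \<and> v \<in> lists X \<and> v \<noteq> [])"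

lemma rw_step_lists:
  assumes "(x, y) \<in> rw_step X R" "rules_ok X R"
  shows "x \<in> lists X" "y \<in> lists X" "x \<noteq> []" "y \<noteq> []"
  using assms unfolding rw_step_def rules_ok_def by (auto 0 4 dest!: bspec)

lemma rw_steps_lists:
  assumes "(x, y) \<in> (rw_step X R)\<^sup>*" "rules_ok X R" "x \<in> lists X" "x \<noteq> []"
  shows "y \<in> lists X \<and> y \<noteq> []"
  using assms(1,3,4) by induction (use rw_step_lists[OF _ assms(2)] in auto)

definition PFX :: "nat set \<Rightarrow> (nat list \<times> nat list) set" where
  "PFX X = {(y, x). x \<in> lists X \<and> (\<exists>a b. x = a @ y @ b \<and> (a \<noteq> [] \<or> b \<noteq> []))}"

definition GO :: "nat set \<Rightarrow> (nat list \<times> nat list) set \<Rightarrow> (nat list \<times> nat list) set" where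
  "GO X R = {(y, x). (x, y) \<in> rw_step X R} \<union> PFX X"

lemma noeth_wf: "rw_noetherian X R \<Longrightarrow> wf ((rw_step X R)\<inverse>)"
  unfolding rw_noetherian_def wf_iff_no_infinite_down_chain by auto

lemma wf_GO:
  assumes noeth: "rw_noetherian X R" and ok: "rules_ok X R"
  shows "wf (GO X R)"
proof -
  have main: "\<forall>y. (\<exists>a b. x = a @ y @ b) \<longrightarrow> y \<in> Wellfounded.acc (GO X R)" if "x \<in> lists X" for x
    using that
  proof (induction x rule: wf_induct[OF noeth_wf[OF noeth]])
    case (1 x)
    show ?case
    proof (intro allI impI)
      fix y assume "\<exists>a b. x = a @ y @ b"
      then show "y \<in> Wellfounded.acc (GO X R)"
      proof (induction "length y" arbitrary: y rule: less_induct)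
        case less
        then obtain a b where xab: "x = a @ y @ b" by blast
        have ab: "a \<in> lists X" "b \<in> lists X" "y \<in> lists X" using "1.prems" xab by auto
        show ?case
        proof (rule accI)
          fix z assume "(z, y) \<in> GO X R"
          then consider "(y, z) \<in> rw_step X R" | "(z, y) \<in> PFX X" unfolding GO_def by blast
          then show "z \<in> Wellfounded.acc (GO X R)"
          proof cases
            case 1
            have st: "(x, a @ z @ b) \<in> rw_step X R" using rw_step_ctx[OF 1 ab(1,2)] xab by simp
            have "a @ z @ b \<in> lists X" using rw_step_lists(2)[OF st ok] .
            moreover have "(a @ z @ b, x) \<in> (rw_step X R)\<inverse>" using st by simp
            ultimately show ?thesis using "1.IH" by blast
          next
            case 2
            then obtain c d where "y = c @ z @ d" "c \<noteq> [] \<or> d \<noteq> []" unfolding PFX_def by blast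
            then show ?thesis using less.hyps[of z] xab
              by (metis append.assoc length_append less_add_same_cancel2 add.commute
                  length_greater_0_conv add_less_mono1 trans_less_add2 less_add_same_cancel1)
          qed
        qed
      qed
    qed
  qed
  show ?thesis unfolding wf_iff_acc
  proof
    fix y show "y \<in> Wellfounded.acc (GO X R)"
    proof (cases "y \<in> lists X")
      case True then show ?thesis using main[of y] by (metis append_Nil append_Nil2)
    next
      case False
      show ?thesis
      proof (rule accI)
        fix z assume "(z, y) \<in> GO X R"
        then have "y \<in> lists X" unfolding GO_def PFX_def using rw_step_lists[OF _ ok] by auto
        with False show "z \<in> Wellfounded.acc (GO X R)" by simp
      qed
    qed
  qed
qed



definition irred :: "nat set \<Rightarrow> (nat list \<times> nat list) set \<Rightarrow> nat list \<Rightarrow> bool" where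
  "irred X R w \<longleftrightarrow> (\<nexists>w'. (w, w') \<in> rw_step X R)"

lemma exists_irred:
  assumes "rw_noetherian X R"
  shows "\<exists>y. (x, y) \<in> (rw_step X R)\<^sup>* \<and> irred X R y"
proof (induction x rule: wf_induct[OF noeth_wf[OF assms]])
  case (1 x)
  show ?case
  proof (cases "irred X R x")
    case True then show ?thesis by blast
  next
    case False
    then obtain x' where "(x, x') \<in> rw_step X R" unfolding irred_def by blast
    moreover have "(x', x) \<in> (rw_step X R)\<inverse>" using \<open>(x, x') \<in> rw_step X R\<close> by simp
    ultimately show ?thesis using 1 by (meson converse_rtrancl_into_rtrancl)
  qed
qed

lemma church_rosser:
  assumes "rw_confluent X R" "(x, y) \<in> (rw_step X R \<union> (rw_step X R)\<inverse>)\<^sup>*"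
  shows "\<exists>c. (x, c) \<in> (rw_step X R)\<^sup>* \<and> (y, c) \<in> (rw_step X R)\<^sup>*"
  using assms(2)
proof (induction rule: rtrancl_induct)
  case base then show ?case by blast
next
  case (step y z)
  then obtain c where c: "(x, c) \<in> (rw_step X R)\<^sup>*" "(y, c) \<in> (rw_step X R)\<^sup>*" by blast
  from step(2) show ?case
  proof
    assume yz: "(y, z) \<in> rw_step X R"
    then obtain d where "(c, d) \<in> (rw_step X R)\<^sup>*" "(z, d) \<in> (rw_step X R)\<^sup>*"
      using assms(1) c(2) unfolding rw_confluent_def by (meson r_into_rtrancl)
    then show ?thesis using c(1) by (meson rtrancl_trans)
  next
    assume "(y, z) \<in> (rw_step X R)\<inverse>"
    then have "(z, y) \<in> rw_step X R" by simp
    then show ?thesis using c by (meson converse_rtrancl_into_rtrancl)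
  qed
qed

lemma irred_rtrancl: "irred X R x \<Longrightarrow> (x, y) \<in> (rw_step X R)\<^sup>* \<Longrightarrow> y = x"
  unfolding irred_def by (erule converse_rtranclE) auto

lemma steps_conv: "(x, y) \<in> (rw_step X R)\<^sup>* \<Longrightarrow> (x, y) \<in> (rw_step X R \<union> (rw_step X R)\<inverse>)\<^sup>*"
  by (meson in_rtrancl_UnI)

lemma conv_sym: "(x, y) \<in> (r \<union> r\<inverse>)\<^sup>* \<Longrightarrow> (y, x) \<in> (r \<union> r\<inverse>)\<^sup>*"
  by (metis converse_Un converse_converse rtrancl_converseI sup_commute)

definition pres_map :: "nat set \<Rightarrow> (nat list \<times> nat list) set \<Rightarrow> 'a set \<Rightarrow> ('a \<Rightarrow> 'a \<Rightarrow> 'a) \<Rightarrow> (nat list \<Rightarrow> 'a) \<Rightarrow> bool" where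
  "pres_map X R S f \<psi> \<longleftrightarrow>
     (\<forall>w\<in>lists X - {[]}. \<psi> w \<in> S) \<and>
     (\<forall>w1\<in>lists X - {[]}. \<forall>w2\<in>lists X - {[]}. \<psi> (w1 @ w2) = f (\<psi> w1) (\<psi> w2)) \<and>
     S \<subseteq> \<psi> ` (lists X - {[]}) \<and>
     (\<forall>w1\<in>lists X - {[]}. \<forall>w2\<in>lists X - {[]}.
        \<psi> w1 = \<psi> w2 \<longleftrightarrow> (w1, w2) \<in> (rw_step X R \<union> (rw_step X R)\<inverse>)\<^sup>*)"

lemma presents_iff: "presents X R S f \<longleftrightarrow> (\<exists>\<psi>. pres_map X R S f \<psi>)"
  unfolding presents_def pres_map_def by blast

lemma fcr_ok: "finite_complete_rws X R \<Longrightarrow> rules_ok X R"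
  unfolding finite_complete_rws_def rules_ok_def by blast

lemma step_val:
  assumes "pres_map X R S f \<psi>" "rules_ok X R" "(x, y) \<in> rw_step X R"
  shows "\<psi> x = \<psi> y"
proof -
  have "x \<in> lists X - {[]}" "y \<in> lists X - {[]}" using rw_step_lists[OF assms(3,2)] by auto
  moreover have "(x, y) \<in> (rw_step X R \<union> (rw_step X R)\<inverse>)\<^sup>*" using assms(3) by blast
  ultimately show ?thesis using assms(1) unfolding pres_map_def by blast
qed

lemma steps_val:
  assumes "pres_map X R S f \<psi>" "rules_ok X R" "(x, y) \<in> (rw_step X R)\<^sup>*"
  shows "\<psi> x = \<psi> y"
  using assms(3) by induction (use step_val[OF assms(1,2)] in auto)

lemma irred_unique:
  assumes fc: "finite_complete_rws X R" and p: "pres_map X R S f \<psi>"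
    and x: "x \<in> lists X - {[]}" and y: "y \<in> lists X - {[]}" and ix: "irred X R x" and iy: "irred X R y"
    and eq: "\<psi> x = \<psi> y"
  shows "x = y"
proof -
  have "(x, y) \<in> (rw_step X R \<union> (rw_step X R)\<inverse>)\<^sup>*" using p x y eq unfolding pres_map_def by blast
  then obtain c where "(x, c) \<in> (rw_step X R)\<^sup>*" "(y, c) \<in> (rw_step X R)\<^sup>*"
    using church_rosser fc unfolding finite_complete_rws_def by blast
  then show ?thesis using irred_rtrancl ix iy by metis
qed

lemma nf_exists:
  assumes fc: "finite_complete_rws X R" and p: "pres_map X R S f \<psi>" and g: "g \<in> S"
  shows "\<exists>w. w \<in> lists X - {[]} \<and> irred X R w \<and> \<psi> w = g"
proof -
  obtain w0 where w0: "w0 \<in> lists X - {[]}" "\<psi> w0 = g" using p g unfolding pres_map_def by blast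
  obtain w where "(w0, w) \<in> (rw_step X R)\<^sup>*" "irred X R w"
    using exists_irred fc unfolding finite_complete_rws_def by blast
  then show ?thesis using w0 rw_steps_lists[of w0 w X R] fcr_ok[OF fc] steps_val[OF p fcr_ok[OF fc]]
    by auto
qed



locale rsg =
  fixes S :: "'a set" and f :: "'a \<Rightarrow> 'a \<Rightarrow> 'a"
  assumes reg: "regular_semigroup S f"
    and finL: "finite {I. left_ideal S f I}"
    and finR: "finite {I. right_ideal S f I}"
begin

lemma cl[simp, intro]: "x \<in> S \<Longrightarrow> y \<in> S \<Longrightarrow> f x y \<in> S"
  using reg unfolding regular_semigroup_def semigroup_on_def by blast

lemma assoc[simp]: "x \<in> S \<Longrightarrow> y \<in> S \<Longrightarrow> z \<in> S \<Longrightarrow> f (f x y) z = f x (f y z)"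
  using reg unfolding regular_semigroup_def semigroup_on_def by blast

lemma regx: "x \<in> S \<Longrightarrow> \<exists>y\<in>S. f (f x y) x = x"
  using reg unfolding regular_semigroup_def by blast

definition leR where "leR x y \<longleftrightarrow> (\<exists>t\<in>S. x = f y t)"
definition leL where "leL x y \<longleftrightarrow> (\<exists>t\<in>S. x = f t y)"
definition leJ where "leJ x y \<longleftrightarrow> (\<exists>s\<in>S. \<exists>t\<in>S. x = f (f s y) t)"
definition eqR where "eqR x y \<longleftrightarrow> leR x y \<and> leR y x"
definition eqL where "eqL x y \<longleftrightarrow> leL x y \<and> leL y x"
definition eqJ where "eqJ x y \<longleftrightarrow> leJ x y \<and> leJ y x"

lemma leR_refl: "x \<in> S \<Longrightarrow> leR x x"
proof -
  assume x: "x \<in> S"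
  then obtain y where y: "y \<in> S" "f (f x y) x = x" using regx by blast
  then have "x = f x (f y x)" using x by simp
  then show ?thesis unfolding leR_def using x y by blast
qed
lemma leL_refl: "x \<in> S \<Longrightarrow> leL x x"
proof -
  assume x: "x \<in> S"
  then obtain y where y: "y \<in> S" "f (f x y) x = x" using regx by blast
  then show ?thesis unfolding leL_def using x y by (metis cl)
qed
lemma leJ_refl: "x \<in> S \<Longrightarrow> leJ x x"
proof -
  assume x: "x \<in> S"
  then obtain y where y: "y \<in> S" "f (f x y) x = x" using regx by blast
  have "f (f (f x y) x) (f y x) = f (f x y) (f x (f y x))" using x y by simp
  also have "\<dots> = f (f x y) (f (f x y) x)" using x y by simp
  also have "\<dots> = x" using x y by simp
  finally show ?thesis unfolding leJ_def using x y by (metis cl)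
qed

lemma leR_trans: "leR x y \<Longrightarrow> leR y z \<Longrightarrow> z \<in> S \<Longrightarrow> leR x z"
proof -
  assume "leR x y" "leR y z" "z \<in> S"
  then obtain t t' where "t \<in> S" "x = f y t" "t' \<in> S" "y = f z t'" unfolding leR_def by blast
  then have "x = f z (f t' t)" "f t' t \<in> S" using \<open>z \<in> S\<close> by simp_all
  then show ?thesis unfolding leR_def by blast
qed
lemma leL_trans: "leL x y \<Longrightarrow> leL y z \<Longrightarrow> z \<in> S \<Longrightarrow> leL x z"
proof -
  assume "leL x y" "leL y z" "z \<in> S"
  then obtain t t' where "t \<in> S" "x = f t y" "t' \<in> S" "y = f t' z" unfolding leL_def by blast
  then have "x = f (f t t') z" "f t t' \<in> S" using \<open>z \<in> S\<close> by simp_all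
  then show ?thesis unfolding leL_def by blast
qed
lemma leJ_trans: "leJ x y \<Longrightarrow> leJ y z \<Longrightarrow> z \<in> S \<Longrightarrow> leJ x z"
proof -
  assume "leJ x y" "leJ y z" "z \<in> S"
  then obtain s t s' t' where st: "s \<in> S" "t \<in> S" "x = f (f s y) t" "s' \<in> S" "t' \<in> S" "y = f (f s' z) t'"
    unfolding leJ_def by blast
  then have "x = f (f (f s s') z) (f t' t)" using \<open>z \<in> S\<close> by simp
  then show ?thesis unfolding leJ_def using st \<open>z \<in> S\<close> by blast
qed

lemma leR_S: "leR x y \<Longrightarrow> y \<in> S \<Longrightarrow> x \<in> S" unfolding leR_def by auto
lemma leL_S: "leL x y \<Longrightarrow> y \<in> S \<Longrightarrow> x \<in> S" unfolding leL_def by auto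
lemma leJ_S: "leJ x y \<Longrightarrow> y \<in> S \<Longrightarrow> x \<in> S" unfolding leJ_def by auto

lemma leR_leJ: "leR x y \<Longrightarrow> y \<in> S \<Longrightarrow> leJ x y"
proof -
  assume "leR x y" "y \<in> S"
  then obtain t where t: "t \<in> S" "x = f y t" unfolding leR_def by blast
  obtain z where z: "z \<in> S" "f (f y z) y = y" using regx \<open>y \<in> S\<close> by blast
  have "x = f (f (f y z) y) t" using t z by simp
  then show ?thesis unfolding leJ_def using t z \<open>y \<in> S\<close> by blast
qed
lemma leL_leJ: "leL x y \<Longrightarrow> y \<in> S \<Longrightarrow> leJ x y"
proof -
  assume "leL x y" "y \<in> S"
  then obtain t where t: "t \<in> S" "x = f t y" unfolding leL_def by blast
  obtain z where z: "z \<in> S" "f (f y z) y = y" using regx \<open>y \<in> S\<close> by blast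
  have "x = f t (f (f y z) y)" using t z by simp
  also have "\<dots> = f (f t y) (f z y)" using t z \<open>y \<in> S\<close> by simp
  finally have "x = f (f t y) (f z y)" .
  then show ?thesis unfolding leJ_def using t z \<open>y \<in> S\<close> by blast
qed

lemma leR_prod: "x \<in> S \<Longrightarrow> y \<in> S \<Longrightarrow> leR (f x y) x" unfolding leR_def by blast
lemma leL_prod: "x \<in> S \<Longrightarrow> y \<in> S \<Longrightarrow> leL (f x y) y" unfolding leL_def by blast
lemma leJ_prod1: "x \<in> S \<Longrightarrow> y \<in> S \<Longrightarrow> leJ (f x y) x" using leR_leJ leR_prod by blast
lemma leJ_prod2: "x \<in> S \<Longrightarrow> y \<in> S \<Longrightarrow> leJ (f x y) y" using leL_leJ leL_prod by blast

lemma eqR_refl: "x \<in> S \<Longrightarrow> eqR x x" unfolding eqR_def using leR_refl by blast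
lemma eqL_refl: "x \<in> S \<Longrightarrow> eqL x x" unfolding eqL_def using leL_refl by blast
lemma eqJ_refl: "x \<in> S \<Longrightarrow> eqJ x x" unfolding eqJ_def using leJ_refl by blast
lemma eqR_sym: "eqR x y \<Longrightarrow> eqR y x" unfolding eqR_def by blast
lemma eqL_sym: "eqL x y \<Longrightarrow> eqL y x" unfolding eqL_def by blast
lemma eqJ_sym: "eqJ x y \<Longrightarrow> eqJ y x" unfolding eqJ_def by blast
lemma eqR_S: "eqR x y \<Longrightarrow> y \<in> S \<Longrightarrow> x \<in> S" unfolding eqR_def using leR_S by blast
lemma eqL_S: "eqL x y \<Longrightarrow> y \<in> S \<Longrightarrow> x \<in> S" unfolding eqL_def using leL_S by blast
lemma eqJ_S: "eqJ x y \<Longrightarrow> y \<in> S \<Longrightarrow> x \<in> S" unfolding eqJ_def using leJ_S by blast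
lemma eqR_trans: "eqR x y \<Longrightarrow> eqR y z \<Longrightarrow> z \<in> S \<Longrightarrow> eqR x z"
  unfolding eqR_def by (metis leR_S leR_trans)
lemma eqL_trans: "eqL x y \<Longrightarrow> eqL y z \<Longrightarrow> z \<in> S \<Longrightarrow> eqL x z"
  unfolding eqL_def by (metis leL_S leL_trans)
lemma eqJ_trans: "eqJ x y \<Longrightarrow> eqJ y z \<Longrightarrow> z \<in> S \<Longrightarrow> eqJ x z"
  unfolding eqJ_def by (metis leJ_S leJ_trans)
lemma eqR_eqJ: "eqR x y \<Longrightarrow> y \<in> S \<Longrightarrow> eqJ x y"
  unfolding eqR_def eqJ_def by (metis leR_S leR_leJ)
lemma eqL_eqJ: "eqL x y \<Longrightarrow> y \<in> S \<Longrightarrow> eqJ x y"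
  unfolding eqL_def eqJ_def by (metis leL_S leL_leJ)

definition Rid where "Rid y = {x\<in>S. leR x y}"
definition Lid where "Lid y = {x\<in>S. leL x y}"
definition Jid where "Jid y = {x\<in>S. leJ x y}"

lemma Rid_right_ideal: "y \<in> S \<Longrightarrow> right_ideal S f (Rid y)"
  unfolding right_ideal_def Rid_def
proof (intro conjI ballI)
  assume y: "y \<in> S"
  show "{x \<in> S. leR x y} \<noteq> {}" using y leR_refl by blast
  fix s x assume "s \<in> S" "x \<in> {x \<in> S. leR x y}"
  then show "f x s \<in> {x \<in> S. leR x y}" using leR_trans[OF leR_prod] y by blast
qed auto
lemma Lid_left_ideal: "y \<in> S \<Longrightarrow> left_ideal S f (Lid y)"
  unfolding left_ideal_def Lid_def
proof (intro conjI ballI)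
  assume y: "y \<in> S"
  show "{x \<in> S. leL x y} \<noteq> {}" using y leL_refl by blast
  fix s x assume "s \<in> S" "x \<in> {x \<in> S. leL x y}"
  then show "f s x \<in> {x \<in> S. leL x y}" using leL_trans[OF leL_prod] y by blast
qed auto
lemma Jid_left_ideal: "y \<in> S \<Longrightarrow> left_ideal S f (Jid y)"
  unfolding left_ideal_def Jid_def
proof (intro conjI ballI)
  assume y: "y \<in> S"
  show "{x \<in> S. leJ x y} \<noteq> {}" using y leJ_refl by blast
  fix s x assume "s \<in> S" "x \<in> {x \<in> S. leJ x y}"
  then show "f s x \<in> {x \<in> S. leJ x y}" using leJ_trans[OF leJ_prod2] y by blast
qed auto

lemma fin_Rid: "finite (Rid ` S)"
  by (rule finite_subset[OF _ finR]) (auto intro: Rid_right_ideal)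
lemma fin_Lid: "finite (Lid ` S)"
  by (rule finite_subset[OF _ finL]) (auto intro: Lid_left_ideal)
lemma fin_Jid: "finite (Jid ` S)"
  by (rule finite_subset[OF _ finL]) (auto intro: Jid_left_ideal)

lemma Rid_eq: "x \<in> S \<Longrightarrow> y \<in> S \<Longrightarrow> Rid x = Rid y \<longleftrightarrow> eqR x y"
  unfolding Rid_def eqR_def
proof
  assume "x \<in> S" "y \<in> S" "{z \<in> S. leR z x} = {z \<in> S. leR z y}"
  then show "leR x y \<and> leR y x" using leR_refl by blast
next
  assume "x \<in> S" "y \<in> S" "leR x y \<and> leR y x"
  then show "{z \<in> S. leR z x} = {z \<in> S. leR z y}" using leR_trans by blast
qed
lemma Lid_eq: "x \<in> S \<Longrightarrow> y \<in> S \<Longrightarrow> Lid x = Lid y \<longleftrightarrow> eqL x y"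
  unfolding Lid_def eqL_def
proof
  assume "x \<in> S" "y \<in> S" "{z \<in> S. leL z x} = {z \<in> S. leL z y}"
  then show "leL x y \<and> leL y x" using leL_refl by blast
next
  assume "x \<in> S" "y \<in> S" "leL x y \<and> leL y x"
  then show "{z \<in> S. leL z x} = {z \<in> S. leL z y}" using leL_trans by blast
qed
lemma Jid_eq: "x \<in> S \<Longrightarrow> y \<in> S \<Longrightarrow> Jid x = Jid y \<longleftrightarrow> eqJ x y"
  unfolding Jid_def eqJ_def
proof
  assume "x \<in> S" "y \<in> S" "{z \<in> S. leJ z x} = {z \<in> S. leJ z y}"
  then show "leJ x y \<and> leJ y x" using leJ_refl by blast
next
  assume "x \<in> S" "y \<in> S" "leJ x y \<and> leJ y x"
  then show "{z \<in> S. leJ z x} = {z \<in> S. leJ z y}" using leJ_trans by blast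
qed

text \<open>Stability.\<close>

lemma stableR:
  assumes x: "x \<in> S" and y: "y \<in> S" and J: "leJ x (f x y)"
  shows "leR x (f x y)"
proof -
  obtain s t where st: "s \<in> S" "t \<in> S" "x = f (f s (f x y)) t" using J unfolding leJ_def by blast
  define z where "z = f y t"
  have z: "z \<in> S" using y st unfolding z_def by simp
  have xz: "x = f s (f x z)" using st x y unfolding z_def by simp
  define p where "p = (\<lambda>n. ((\<lambda>w. f w z) ^^ n) x)"
  have p0: "p 0 = x" and pS: "p (Suc n) = f (p n) z" for n unfolding p_def by simp_all
  have pin: "p n \<in> S" for n by (induction n) (use x z p0 pS in auto)
  have sig: "\<exists>\<sigma>\<in>S. x = f \<sigma> (p (Suc n))" for n
  proof (induction n)
    case 0 then show ?case using xz st p0 pS by auto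
  next
    case (Suc n)
    then obtain \<sigma> where \<sigma>: "\<sigma> \<in> S" "x = f \<sigma> (p (Suc n))" by blast
    have "x = f s (f x z)" by (rule xz)
    also have "\<dots> = f s (f (f \<sigma> (p (Suc n))) z)" using \<sigma> by simp
    also have "\<dots> = f (f s \<sigma>) (p (Suc (Suc n)))" using \<sigma> st z pin pS by simp
    finally show ?case using \<sigma> st by blast
  qed
  have dec: "leR (p (n + k)) (p n)" for n k
  proof (induction k)
    case 0 then show ?case using leR_refl pin by simp
  next
    case (Suc k)
    have "leR (p (Suc (n + k))) (p (n + k))" using pS leR_prod pin z by simp
    then show ?case using Suc leR_trans pin by simp
  qed
  have "finite (Rid ` S)" by (rule fin_Rid)
  then have "finite (range (\<lambda>n. Rid (p (Suc n))))" by (rule finite_subset[rotated]) (use pin in auto)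
  then have "\<not> inj (\<lambda>n. Rid (p (Suc n)))" using finite_imageD infinite_UNIV_nat by blast
  then obtain a b where ab: "a \<noteq> b" "Rid (p (Suc a)) = Rid (p (Suc b))" unfolding inj_def by blast
  then obtain n m where nm: "n < m" "Rid (p (Suc n)) = Rid (p (Suc m))"
    by (cases "a < b") (auto, metis linorder_neqE_nat)
  then have "eqR (p (Suc n)) (p (Suc m))" using Rid_eq pin by blast
  moreover have "leR (p (Suc m)) (p (Suc (Suc n)))" using dec[of "Suc (Suc n)" "m - Suc n"] nm by simp
  ultimately have "leR (p (Suc n)) (p (Suc (Suc n)))" unfolding eqR_def using leR_trans pin by blast
  then obtain r where r: "r \<in> S" "p (Suc n) = f (f (p (Suc n)) z) r" unfolding leR_def using pS by auto
  obtain \<sigma> where \<sigma>: "\<sigma> \<in> S" "x = f \<sigma> (p (Suc n))" using sig by blast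
  have "x = f \<sigma> (f (f (p (Suc n)) z) r)" using \<sigma> r by simp
  also have "\<dots> = f (f (f \<sigma> (p (Suc n))) z) r" using \<sigma> r z pin by simp
  also have "\<dots> = f (f x y) (f t r)" using \<sigma> x y st r unfolding z_def by simp
  finally show ?thesis unfolding leR_def using st r by blast
qed

lemma stableL:
  assumes x: "x \<in> S" and y: "y \<in> S" and J: "leJ x (f y x)"
  shows "leL x (f y x)"
proof -
  obtain s t where st: "s \<in> S" "t \<in> S" "x = f (f s (f y x)) t" using J unfolding leJ_def by blast
  define z where "z = f s y"
  have z: "z \<in> S" using y st unfolding z_def by simp
  have xz: "x = f (f z x) t" using st x y unfolding z_def by simp
  define p where "p = (\<lambda>n. ((\<lambda>w. f z w) ^^ n) x)"
  have p0: "p 0 = x" and pS: "p (Suc n) = f z (p n)" for n unfolding p_def by simp_all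
  have pin: "p n \<in> S" for n by (induction n) (use x z p0 pS in auto)
  have sig: "\<exists>\<sigma>\<in>S. x = f (p (Suc n)) \<sigma>" for n
  proof (induction n)
    case 0 then show ?case using xz st p0 pS by auto
  next
    case (Suc n)
    then obtain \<sigma> where \<sigma>: "\<sigma> \<in> S" "x = f (p (Suc n)) \<sigma>" by blast
    have "x = f (f z x) t" by (rule xz)
    also have "\<dots> = f (f z (f (p (Suc n)) \<sigma>)) t" using \<sigma> by simp
    also have "\<dots> = f (p (Suc (Suc n))) (f \<sigma> t)" using \<sigma> st z pin pS by simp
    finally show ?case using \<sigma> st by blast
  qed
  have dec: "leL (p (n + k)) (p n)" for n k
  proof (induction k)
    case 0 then show ?case using leL_refl pin by simp
  next
    case (Suc k)
    have "leL (p (Suc (n + k))) (p (n + k))" using pS leL_prod pin z by simp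
    then show ?case using Suc leL_trans pin by simp
  qed
  have "finite (Lid ` S)" by (rule fin_Lid)
  then have "finite (range (\<lambda>n. Lid (p (Suc n))))" by (rule finite_subset[rotated]) (use pin in auto)
  then have "\<not> inj (\<lambda>n. Lid (p (Suc n)))" using finite_imageD infinite_UNIV_nat by blast
  then obtain a b where ab: "a \<noteq> b" "Lid (p (Suc a)) = Lid (p (Suc b))" unfolding inj_def by blast
  then obtain n m where nm: "n < m" "Lid (p (Suc n)) = Lid (p (Suc m))"
    by (cases "a < b") (auto, metis linorder_neqE_nat)
  then have "eqL (p (Suc n)) (p (Suc m))" using Lid_eq pin by blast
  moreover have "leL (p (Suc m)) (p (Suc (Suc n)))" using dec[of "Suc (Suc n)" "m - Suc n"] nm by simp
  ultimately have "leL (p (Suc n)) (p (Suc (Suc n)))" unfolding eqL_def using leL_trans pin by blast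
  then obtain r where r: "r \<in> S" "p (Suc n) = f r (f z (p (Suc n)))" unfolding leL_def using pS by auto
  obtain \<sigma> where \<sigma>: "\<sigma> \<in> S" "x = f (p (Suc n)) \<sigma>" using sig by blast
  have "x = f (f r (f z (p (Suc n)))) \<sigma>" using \<sigma>(2) arg_cong[OF r(2), of "\<lambda>w. f w \<sigma>"] by simp
  also have "\<dots> = f (f r z) (f (p (Suc n)) \<sigma>)" using \<sigma>(1) r(1) z pin by simp
  also have "\<dots> = f (f r s) (f y x)" using \<sigma> x y st r(1) unfolding z_def by simp
  finally show ?thesis unfolding leL_def using st r by blast
qed

lemma stabR: "x \<in> S \<Longrightarrow> y \<in> S \<Longrightarrow> eqJ (f x y) x \<Longrightarrow> eqR (f x y) x"
  unfolding eqR_def eqJ_def using stableR leR_prod by blast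
lemma stabL: "x \<in> S \<Longrightarrow> y \<in> S \<Longrightarrow> eqJ (f y x) x \<Longrightarrow> eqL (f y x) x"
  unfolding eqL_def eqJ_def using stableL leL_prod by blast

end


context rsg begin

definition idem where "idem e \<longleftrightarrow> e \<in> S \<and> f e e = e"
definition ide where "ide y = (SOME e. idem e \<and> eqJ e y)"

lemma ide_ex: "y \<in> S \<Longrightarrow> \<exists>e. idem e \<and> eqR e y"
proof -
  assume y: "y \<in> S"
  then obtain z where z: "z \<in> S" "f (f y z) y = y" using regx by blast
  let ?e = "f y z"
  have "f ?e ?e = f (f (f y z) y) z" using y z(1) by simp
  also have "\<dots> = ?e" using z by (simp only: z(2))
  finally have "f ?e ?e = ?e" .
  moreover have "leR ?e y" using leR_prod y z by blast
  moreover have "leR y ?e" unfolding leR_def using z y by (metis cl)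
  ultimately show ?thesis unfolding idem_def eqR_def using y z by blast
qed

lemma ide: "y \<in> S \<Longrightarrow> idem (ide y) \<and> eqJ (ide y) y"
proof -
  assume y: "y \<in> S"
  then obtain e where "idem e" "eqR e y" using ide_ex by blast
  then have "idem e \<and> eqJ e y" using eqR_eqJ y by blast
  then show ?thesis unfolding ide_def by (rule someI)
qed

lemma ide_S: "y \<in> S \<Longrightarrow> ide y \<in> S" using ide idem_def by blast

lemma ide_cong: "y \<in> S \<Longrightarrow> y' \<in> S \<Longrightarrow> eqJ y y' \<Longrightarrow> ide y = ide y'"
proof -
  assume "y \<in> S" "y' \<in> S" "eqJ y y'"
  then have "(\<lambda>e. idem e \<and> eqJ e y) = (\<lambda>e. idem e \<and> eqJ e y')"
    using eqJ_trans eqJ_sym idem_def by (metis (lifting))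
  then show ?thesis unfolding ide_def by simp
qed

lemma ide_ide: "y \<in> S \<Longrightarrow> ide (ide y) = ide y"
  using ide_cong ide ide_S by blast

definition E where "E = ide ` S"

lemma finite_E: "finite E"
proof -
  define F where "F I = ide (SOME y. y \<in> S \<and> Jid y = I)" for I
  have "E \<subseteq> F ` (Jid ` S)"
  proof
    fix e assume "e \<in> E"
    then obtain y where y: "y \<in> S" "e = ide y" unfolding E_def by blast
    define y' where "y' = (SOME y'. y' \<in> S \<and> Jid y' = Jid y)"
    have "y' \<in> S \<and> Jid y' = Jid y" unfolding y'_def by (rule someI[of _ y]) (use y in simp)
    then have "ide y' = ide y" using ide_cong Jid_eq y by metis
    then have "e = F (Jid y)" unfolding F_def using y y'_def by simp
    then show "e \<in> F ` (Jid ` S)" using y by blast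
  qed
  then show ?thesis using finite_subset fin_Jid by blast
qed

lemma E_idem: "e \<in> E \<Longrightarrow> idem e" unfolding E_def using ide by blast
lemma E_S: "e \<in> E \<Longrightarrow> e \<in> S" using E_idem idem_def by blast
lemma E_ide: "e \<in> E \<Longrightarrow> ide e = e" unfolding E_def using ide_ide by blast
lemma ide_E: "y \<in> S \<Longrightarrow> ide y \<in> E" unfolding E_def by blast

lemma E_eqJ: "e \<in> E \<Longrightarrow> e' \<in> E \<Longrightarrow> eqJ e e' \<Longrightarrow> e = e'"
  using E_ide ide_cong E_S by metis

definition H where "H e = {g\<in>S. eqR g e \<and> eqL g e}"

lemma idem_leR: "idem e \<Longrightarrow> leR g e \<Longrightarrow> f e g = g"
  unfolding idem_def leR_def by (metis assoc)
lemma idem_leL: "idem e \<Longrightarrow> leL g e \<Longrightarrow> f g e = g"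
  unfolding idem_def leL_def by (metis assoc)

lemma H_unit: "idem e \<Longrightarrow> g \<in> H e \<Longrightarrow> f e g = g \<and> f g e = g"
  unfolding H_def eqR_def eqL_def using idem_leR idem_leL by blast

lemma e_in_H: "idem e \<Longrightarrow> e \<in> H e"
  unfolding H_def idem_def using eqR_refl eqL_refl by blast

lemma H_mult:
  assumes e: "idem e" and g: "g \<in> H e" and h: "h \<in> H e"
  shows "f g h \<in> H e"
proof -
  have S: "e \<in> S" "g \<in> S" "h \<in> S" using e g h unfolding idem_def H_def by auto
  have u: "f e g = g" "f g e = g" "f e h = h" "f h e = h" using H_unit e g h by auto
  obtain s where s: "s \<in> S" "e = f g s" using g unfolding H_def eqR_def leR_def by blast
  obtain u' where u': "u' \<in> S" "e = f h u'" using h unfolding H_def eqR_def leR_def by blast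
  obtain t where t: "t \<in> S" "e = f t h" using h unfolding H_def eqL_def leL_def by blast
  obtain t' where t': "t' \<in> S" "e = f t' g" using g unfolding H_def eqL_def leL_def by blast
  have r1: "leR (f g h) e" using leR_trans[OF leR_prod] S g unfolding H_def eqR_def by blast
  have "e = f (f g h) (f u' s)"
  proof -
    have "f (f g h) (f u' s) = f (f g (f h u')) s" using S s(1) u'(1) by simp
    also have "\<dots> = f (f g e) s" by (simp only: u'(2)[symmetric])
    also have "\<dots> = e" by (simp only: u(2) s(2)[symmetric])
    finally show ?thesis by simp
  qed
  then have r2: "leR e (f g h)" unfolding leR_def using u' s by blast
  have l1: "leL (f g h) e" using leL_trans[OF leL_prod] S h unfolding H_def eqL_def by blast
  have "e = f (f t t') (f g h)"
  proof -
    have "f (f t t') (f g h) = f t (f (f t' g) h)" using S t(1) t'(1) by simp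
    also have "\<dots> = f t (f e h)" by (simp only: t'(2)[symmetric])
    also have "\<dots> = e" by (simp only: u(3) t(2)[symmetric])
    finally show ?thesis by simp
  qed
  then have l2: "leL e (f g h)" unfolding leL_def using t t' by blast
  show ?thesis unfolding H_def eqR_def eqL_def using r1 r2 l1 l2 S by simp
qed

lemma H_inv:
  assumes e: "idem e" and g: "g \<in> H e"
  shows "\<exists>y\<in>H e. f g y = e \<and> f y g = e"
proof -
  have S: "e \<in> S" "g \<in> S" using e g unfolding idem_def H_def by auto
  have u: "f e g = g" "f g e = g" using H_unit e g by auto
  obtain s where s: "s \<in> S" "e = f g s" using g unfolding H_def eqR_def leR_def by blast
  obtain t where t: "t \<in> S" "e = f t g" using g unfolding H_def eqL_def leL_def by blast
  define y where "y = f (f e t) e"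
  have yS: "y \<in> S" unfolding y_def using S t by simp
  have ee: "f e e = e" using e unfolding idem_def by simp
  have yg: "f y g = e"
  proof -
    have "f y g = f e (f t g)" unfolding y_def using S t(1) u by simp
    also have "\<dots> = e" by (simp only: t(2)[symmetric] u ee)
    finally show ?thesis .
  qed
  have gte: "f (f g t) e = e"
  proof -
    have "f (f g t) e = f (f g t) (f g s)" by (simp only: s(2)[symmetric])
    also have "\<dots> = f (f g (f t g)) s" using S s(1) t(1) by simp
    also have "\<dots> = e" by (simp only: t(2)[symmetric] u s(2)[symmetric])
    finally show ?thesis .
  qed
  have gy: "f g y = e"
  proof -
    have "f g y = f (f (f g e) t) e" unfolding y_def using S t(1) by simp
    also have "\<dots> = e" by (simp only: u gte)
    finally show ?thesis .
  qed
  have "y = f e (f t e)" unfolding y_def using S t(1) by simp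
  then have "leR y e" unfolding leR_def using S t(1) by blast
  moreover have "leR e y" unfolding leR_def using yg S by metis
  moreover have "leL y e" unfolding y_def leL_def using S t(1) by blast
  moreover have "leL e y" unfolding leL_def using gy S by metis
  ultimately have "y \<in> H e" unfolding H_def eqR_def eqL_def using yS by blast
  then show ?thesis using gy yg by blast
qed

lemma H_subgroup: "idem e \<Longrightarrow> subgroup_of S f (H e)"
  unfolding subgroup_of_def
proof (intro conjI)
  assume e: "idem e"
  show "H e \<subseteq> S" unfolding H_def by blast
  show "H e \<noteq> {}" using e_in_H e by blast
  show "\<forall>x\<in>H e. \<forall>y\<in>H e. f x y \<in> H e" using H_mult e by blast
  show "\<exists>ea\<in>H e. (\<forall>x\<in>H e. f ea x = x \<and> f x ea = x) \<and> (\<forall>x\<in>H e. \<exists>y\<in>H e. f x y = ea \<and> f y x = ea)"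
    using e_in_H[OF e] H_unit[OF e] H_inv[OF e] by blast
qed

lemma H_maximal: "idem e \<Longrightarrow> maximal_subgroup S f (H e)"
  unfolding maximal_subgroup_def
proof (intro conjI allI impI)
  assume e: "idem e"
  show "subgroup_of S f (H e)" using H_subgroup e by blast
  fix K assume K: "subgroup_of S f K \<and> H e \<subseteq> K"
  then obtain e' where e': "e' \<in> K" "\<forall>x\<in>K. f e' x = x \<and> f x e' = x" "\<forall>x\<in>K. \<exists>y\<in>K. f x y = e' \<and> f y x = e'"
    and KS: "K \<subseteq> S" unfolding subgroup_of_def by blast
  have eK: "e \<in> K" using K e_in_H e by blast
  have eS: "e \<in> S" "f e e = e" using e unfolding idem_def by auto
  obtain y where y: "y \<in> K" "f e y = e'" "f y e = e'" using e' eK by blast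
  have yS: "y \<in> S" using y KS by blast
  have "f e' e = f (f y e) e" using y by simp
  also have "\<dots> = f y e" using yS eS by simp
  finally have ee: "e = e'" using e' eK y by simp
  show "K = H e"
  proof
    show "H e \<subseteq> K" using K by blast
    show "K \<subseteq> H e"
    proof
      fix k assume k: "k \<in> K"
      have kS: "k \<in> S" using k KS by blast
      obtain z where z: "z \<in> K" "f k z = e" "f z k = e" using e' k ee by blast
      have zS: "z \<in> S" using z KS by blast
      have "k = f e k" "k = f k e" using e' k ee by auto
      then have "leR k e" "leL k e" unfolding leR_def leL_def using kS by auto
      moreover have "leR e k" "leL e k" unfolding leR_def leL_def using z zS by metis+
      ultimately show "k \<in> H e" unfolding H_def eqR_def eqL_def using kS by blast
    qed
  qed
qed

end


context rsg begin

definition lrep where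
  "lrep y = (if eqR y (ide y) then ide y else SOME a. a \<in> S \<and> eqR a y \<and> eqL a (ide y))"
definition rrep where
  "rrep y = (if eqL y (ide y) then ide y else SOME b. b \<in> S \<and> eqR b (ide y) \<and> eqL b y)"

lemma reps_ex:
  assumes y: "y \<in> S"
  shows "\<exists>a. a \<in> S \<and> eqR a y \<and> eqL a (ide y)" "\<exists>b. b \<in> S \<and> eqR b (ide y) \<and> eqL b y"
proof -
  let ?e = "ide y"
  have e: "?e \<in> S" "eqJ ?e y" using ide y ide_S by auto
  then obtain u v where uv: "u \<in> S" "v \<in> S" "y = f (f u ?e) v" unfolding eqJ_def leJ_def by blast
  let ?a = "f u ?e" and ?b = "f ?e v"
  have aS: "?a \<in> S" "?b \<in> S" using uv e by auto
  have yav: "y = f ?a v" using uv by simp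
  have yub: "y = f u ?b" using uv e by simp
  have "leR y ?a" unfolding leR_def using uv(2) yav by blast
  then have "leJ y ?a" using leR_leJ aS by blast
  then have "leJ ?e ?a" using leJ_trans[of ?e y ?a] e(2) aS unfolding eqJ_def by blast
  then have J1: "eqJ ?a ?e" unfolding eqJ_def using leJ_prod2[of u ?e] uv e by blast
  have La: "eqL ?a ?e" using stabL[OF e(1) uv(1) J1] .
  have "leJ ?a y" using J1 e leJ_trans[of ?a ?e y] y unfolding eqJ_def by blast
  have "eqJ y ?a" unfolding eqJ_def using \<open>leJ y ?a\<close> \<open>leJ ?a y\<close> by blast
  then have "eqJ (f ?a v) ?a" by (simp only: yav[symmetric])
  then have "eqR (f ?a v) ?a" by (rule stabR[OF aS(1) uv(2)])
  then have "eqR y ?a" by (simp only: yav[symmetric])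
  then show "\<exists>a. a \<in> S \<and> eqR a y \<and> eqL a (ide y)" using aS La eqR_sym by blast
  have "leL y ?b" unfolding leL_def using uv(1) yub by blast
  then have "leJ y ?b" using leL_leJ aS by blast
  then have "leJ ?e ?b" using leJ_trans[of ?e y ?b] e(2) aS unfolding eqJ_def by blast
  then have J2: "eqJ ?b ?e" unfolding eqJ_def using leJ_prod1[of ?e v] uv e by blast
  have Rb: "eqR ?b ?e" using stabR[OF e(1) uv(2) J2] .
  have "leJ ?b y" using J2 e leJ_trans[of ?b ?e y] y unfolding eqJ_def by blast
  have "eqJ y ?b" unfolding eqJ_def using \<open>leJ y ?b\<close> \<open>leJ ?b y\<close> by blast
  then have "eqJ (f u ?b) ?b" by (simp only: yub[symmetric])
  then have "eqL (f u ?b) ?b" by (rule stabL[OF aS(2) uv(1)])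
  then have "eqL y ?b" by (simp only: yub[symmetric])
  then show "\<exists>b. b \<in> S \<and> eqR b (ide y) \<and> eqL b y" using aS Rb eqL_sym by blast
qed

lemma lrep: "y \<in> S \<Longrightarrow> lrep y \<in> S \<and> eqR (lrep y) y \<and> eqL (lrep y) (ide y)"
proof -
  assume y: "y \<in> S"
  show ?thesis
  proof (cases "eqR y (ide y)")
    case True
    then show ?thesis unfolding lrep_def using eqR_sym eqL_refl ide_S y by auto
  next
    case False
    then show ?thesis unfolding lrep_def using someI_ex[OF reps_ex(1)[OF y]] by simp
  qed
qed

lemma rrep: "y \<in> S \<Longrightarrow> rrep y \<in> S \<and> eqR (rrep y) (ide y) \<and> eqL (rrep y) y"
proof -
  assume y: "y \<in> S"
  show ?thesis
  proof (cases "eqL y (ide y)")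
    case True
    then show ?thesis unfolding rrep_def using eqL_sym eqR_refl ide_S y by auto
  next
    case False
    then show ?thesis unfolding rrep_def using someI_ex[OF reps_ex(2)[OF y]] by simp
  qed
qed

lemma lrep_cong: "y \<in> S \<Longrightarrow> y' \<in> S \<Longrightarrow> eqR y y' \<Longrightarrow> lrep y = lrep y'"
proof -
  assume y: "y \<in> S" "y' \<in> S" "eqR y y'"
  have e: "ide y = ide y'" using ide_cong eqR_eqJ y by blast
  have yy: "eqR y' y" using eqR_sym y(3) by blast
  have c: "eqR y (ide y) \<longleftrightarrow> eqR y' (ide y')"
    using e eqR_trans[of y y' "ide y'"] eqR_trans[of y' y "ide y"] yy y(3) ide_S[OF y(1)] by auto
  have p: "(\<lambda>a. a \<in> S \<and> eqR a y \<and> eqL a (ide y)) = (\<lambda>a. a \<in> S \<and> eqR a y' \<and> eqL a (ide y'))"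
  proof (rule ext)
    fix a show "(a \<in> S \<and> eqR a y \<and> eqL a (ide y)) = (a \<in> S \<and> eqR a y' \<and> eqL a (ide y'))"
      using e eqR_trans[of a y y'] eqR_trans[of a y' y] yy y by auto
  qed
  show ?thesis unfolding lrep_def using c p e by simp
qed

lemma rrep_cong: "y \<in> S \<Longrightarrow> y' \<in> S \<Longrightarrow> eqL y y' \<Longrightarrow> rrep y = rrep y'"
proof -
  assume y: "y \<in> S" "y' \<in> S" "eqL y y'"
  have e: "ide y = ide y'" using ide_cong eqL_eqJ y by blast
  have yy: "eqL y' y" using eqL_sym y(3) by blast
  have c: "eqL y (ide y) \<longleftrightarrow> eqL y' (ide y')"
    using e eqL_trans[of y y' "ide y'"] eqL_trans[of y' y "ide y"] yy y(3) ide_S[OF y(1)] by auto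
  have p: "(\<lambda>b. b \<in> S \<and> eqR b (ide y) \<and> eqL b y) = (\<lambda>b. b \<in> S \<and> eqR b (ide y') \<and> eqL b y')"
  proof (rule ext)
    fix b show "(b \<in> S \<and> eqR b (ide y) \<and> eqL b y) = (b \<in> S \<and> eqR b (ide y') \<and> eqL b y')"
      using e eqL_trans[of b y y'] eqL_trans[of b y' y] yy y by auto
  qed
  show ?thesis unfolding rrep_def using c p e by simp
qed

lemma lrep_lrep: "y \<in> S \<Longrightarrow> lrep (lrep y) = lrep y"
  using lrep[of y] lrep_cong[of "lrep y" y] by blast
lemma rrep_rrep: "y \<in> S \<Longrightarrow> rrep (rrep y) = rrep y"
  using rrep[of y] rrep_cong[of "rrep y" y] by blast

lemma lrep_E: "e \<in> E \<Longrightarrow> lrep e = e"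
  unfolding lrep_def using E_ide E_S eqR_refl by simp
lemma rrep_E: "e \<in> E \<Longrightarrow> rrep e = e"
  unfolding rrep_def using E_ide E_S eqL_refl by simp

lemma fin_lrep: "finite (lrep ` S)"
proof -
  define F where "F I = lrep (SOME y. y \<in> S \<and> Rid y = I)" for I
  have "lrep ` S \<subseteq> F ` (Rid ` S)"
  proof
    fix a assume "a \<in> lrep ` S"
    then obtain y where y: "y \<in> S" "a = lrep y" by blast
    define y' where "y' = (SOME y'. y' \<in> S \<and> Rid y' = Rid y)"
    have "y' \<in> S \<and> Rid y' = Rid y" unfolding y'_def by (rule someI[of _ y]) (use y in simp)
    then have "lrep y' = lrep y" using lrep_cong[of y' y] Rid_eq[of y' y] y by blast
    then have "a = F (Rid y)" unfolding F_def using y y'_def by simp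
    then show "a \<in> F ` (Rid ` S)" using y by blast
  qed
  then show ?thesis using finite_subset fin_Rid by blast
qed

lemma fin_rrep: "finite (rrep ` S)"
proof -
  define F where "F I = rrep (SOME y. y \<in> S \<and> Lid y = I)" for I
  have "rrep ` S \<subseteq> F ` (Lid ` S)"
  proof
    fix a assume "a \<in> rrep ` S"
    then obtain y where y: "y \<in> S" "a = rrep y" by blast
    define y' where "y' = (SOME y'. y' \<in> S \<and> Lid y' = Lid y)"
    have "y' \<in> S \<and> Lid y' = Lid y" unfolding y'_def by (rule someI[of _ y]) (use y in simp)
    then have "rrep y' = rrep y" using rrep_cong[of y' y] Lid_eq[of y' y] y by blast
    then have "a = F (Lid y)" unfolding F_def using y y'_def by simp
    then show "a \<in> F ` (Lid ` S)" using y by blast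
  qed
  then show ?thesis using finite_subset fin_Lid by blast
qed

text \<open>Green decomposition.\<close>

definition linv where "linv e a = (SOME t. t \<in> S \<and> f t a = e)"
definition rinv where "rinv e b = (SOME t. t \<in> S \<and> f b t = e)"

lemma linv: "eqL a e \<Longrightarrow> linv e a \<in> S \<and> f (linv e a) a = e"
  unfolding linv_def eqL_def leL_def by (rule someI_ex) metis
lemma rinv: "eqR b e \<Longrightarrow> rinv e b \<in> S \<and> f b (rinv e b) = e"
  unfolding rinv_def eqR_def leR_def by (rule someI_ex) metis

lemma green_decomp:
  assumes e: "idem e" and a: "a \<in> S" "eqL a e" and b: "b \<in> S" "eqR b e"
    and y: "y \<in> S" "eqR y a" "eqL y b"
  shows "f (f (linv e a) y) (rinv e b) \<in> H e \<and> y = f (f a (f (f (linv e a) y) (rinv e b))) b"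
proof -
  let ?a' = "linv e a" and ?b' = "rinv e b"
  have a': "?a' \<in> S" "f ?a' a = e" using linv a by auto
  have b': "?b' \<in> S" "f b ?b' = e" using rinv b by auto
  have eS: "e \<in> S" "f e e = e" using e unfolding idem_def by auto
  have ae: "f a e = e \<Longrightarrow> True" by simp
  have ae: "f a e = a" using idem_leL e a unfolding eqL_def by blast
  have eb: "f e b = b" using idem_leR e b unfolding eqR_def by blast
  obtain s where s: "s \<in> S" "y = f a s" using y unfolding eqR_def leR_def by blast
  obtain t where t: "t \<in> S" "y = f t b" using y unfolding eqL_def leL_def by blast
  obtain r1 where r1: "r1 \<in> S" "a = f y r1" using y unfolding eqR_def leR_def by blast
  obtain r2 where r2: "r2 \<in> S" "b = f r2 y" using y unfolding eqL_def leL_def by blast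
  let ?g = "f (f ?a' y) ?b'"
  have gS: "?g \<in> S" using a'(1) b'(1) y(1) by simp
  have aay: "f a (f ?a' y) = y"
  proof -
    have "f a (f ?a' y) = f a (f ?a' (f a s))" by (simp only: s(2)[symmetric])
    also have "\<dots> = f (f a (f ?a' a)) s" using a(1) a'(1) s(1) by simp
    also have "\<dots> = y" by (simp only: a'(2) ae s(2)[symmetric])
    finally show ?thesis .
  qed
  have ybb: "f (f y ?b') b = y"
  proof -
    have "f (f y ?b') b = f (f (f t b) ?b') b" by (simp only: t(2)[symmetric])
    also have "\<dots> = f t (f (f b ?b') b)" using b(1) b'(1) t(1) by simp
    also have "\<dots> = y" by (simp only: b'(2) eb t(2)[symmetric])
    finally show ?thesis .
  qed
  have dec: "y = f (f a ?g) b"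
  proof -
    have "f (f a ?g) b = f (f (f a (f ?a' y)) ?b') b" using a(1) a'(1) b'(1) y(1) by simp
    also have "\<dots> = y" by (simp only: aay ybb)
    finally show ?thesis by simp
  qed
  have "?g = f e (f s ?b')"
  proof -
    have "?g = f (f ?a' (f a s)) ?b'" by (simp only: s(2)[symmetric])
    also have "\<dots> = f (f ?a' a) (f s ?b')" using a(1) a'(1) b'(1) s(1) by simp
    finally show ?thesis by (simp only: a'(2))
  qed
  then have g1: "leR ?g e" unfolding leR_def using s b' by auto
  have "?g = f (f ?a' t) e"
  proof -
    have "?g = f (f ?a' (f t b)) ?b'" by (simp only: t(2)[symmetric])
    also have "\<dots> = f (f ?a' t) (f b ?b')" using b(1) a'(1) b'(1) t(1) by simp
    finally show ?thesis by (simp only: b'(2))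
  qed
  then have g2: "leL ?g e" unfolding leL_def using t a' by auto
  have zb: "f (f ?g b) r1 = e"
  proof -
    have "f ?g b = f ?a' (f (f y ?b') b)" using a'(1) b'(1) y(1) b(1) by simp
    also have "\<dots> = f ?a' y" by (simp only: ybb)
    finally have "f (f ?g b) r1 = f ?a' (f y r1)" using a'(1) y(1) r1(1) by simp
    also have "\<dots> = e" by (simp only: r1(2)[symmetric] a'(2))
    finally show ?thesis .
  qed
  then have g3: "leR e ?g" unfolding leR_def using gS b r1 by (metis assoc cl)
  have rg: "f (f r2 a) ?g = e"
  proof -
    have "f (f r2 a) ?g = f r2 (f (f a (f ?a' y)) ?b')" using r2(1) a(1) a'(1) b'(1) y(1) by simp
    also have "\<dots> = f r2 (f y ?b')" by (simp only: aay)
    also have "\<dots> = f (f r2 y) ?b'" using r2(1) y(1) b'(1) by simp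
    also have "\<dots> = e" by (simp only: r2(2)[symmetric] b'(2))
    finally show ?thesis .
  qed
  then have g4: "leL e ?g" unfolding leL_def using r2 a by (metis cl)
  have "?g \<in> H e" unfolding H_def eqR_def eqL_def using gS g1 g2 g3 g4 by blast
  then show ?thesis using dec by simp
qed

lemma green_unique:
  assumes e: "idem e" and a: "a \<in> S" "eqL a e" and b: "b \<in> S" "eqR b e"
    and g: "g \<in> H e" and eq: "f (f a g) b = y"
  shows "f (f (linv e a) y) (rinv e b) = g"
proof -
  let ?a' = "linv e a" and ?b' = "rinv e b"
  have a': "?a' \<in> S" "f ?a' a = e" using linv a by auto
  have b': "?b' \<in> S" "f b ?b' = e" using rinv b by auto
  have gS: "g \<in> S" using g unfolding H_def by blast
  have u: "f e g = g" "f g e = g" using H_unit e g by auto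
  have "f (f ?a' y) ?b' = f (f (f ?a' a) g) (f b ?b')" using a(1) a'(1) b(1) b'(1) gS eq[symmetric] by simp
  also have "\<dots> = g" by (simp only: a'(2) b'(2) u)
  finally show ?thesis .
qed

lemma green_compose:
  assumes e: "idem e" and a: "a \<in> S" "eqL a e" and b: "b \<in> S" "eqR b e"
    and g: "g \<in> H e"
  shows "f (f a g) b \<in> S \<and> eqR (f (f a g) b) a \<and> eqL (f (f a g) b) b"
proof -
  let ?y = "f (f a g) b"
  let ?a' = "linv e a" and ?b' = "rinv e b"
  have a': "?a' \<in> S" "f ?a' a = e" using linv a by auto
  have b': "?b' \<in> S" "f b ?b' = e" using rinv b by auto
  have gS: "g \<in> S" using g unfolding H_def by blast
  have eS: "e \<in> S" using e unfolding idem_def by auto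
  have u: "f e g = g" "f g e = g" using H_unit e g by auto
  obtain h where h: "h \<in> H e" "f g h = e" "f h g = e" using H_inv e g by blast
  have hS: "h \<in> S" using h unfolding H_def by blast
  have ae: "f a e = a" using idem_leL e a unfolding eqL_def by blast
  have eb: "f e b = b" using idem_leR e b unfolding eqR_def by blast
  have yS: "?y \<in> S" using a b gS by simp
  have "f ?y (f ?b' h) = f a (f (f g (f b ?b')) h)" using a(1) b(1) gS b'(1) hS by simp
  also have "\<dots> = f a (f g h)" by (simp only: b'(2) u)
  also have "\<dots> = a" by (simp only: h(2) ae)
  finally have "leR a ?y" unfolding leR_def using b' hS by (metis cl)
  moreover have "leR ?y a" unfolding leR_def using a gS b by (metis assoc cl)
  moreover have "f (f h ?a') ?y = f (f h (f (f ?a' a) g)) b" using a(1) b(1) gS a'(1) hS by simp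
  moreover have "f (f h (f (f ?a' a) g)) b = b" by (simp only: a'(2) u h(3) eb)
  ultimately have "eqR ?y a" "leL b ?y" unfolding eqR_def leL_def using a' hS by (metis cl)+
  moreover have "leL ?y b" unfolding leL_def using a gS by (metis cl)
  ultimately show ?thesis unfolding eqL_def using yS by blast
qed

definition gp where "gp y = f (f (linv (ide y) (lrep y)) y) (rinv (ide y) (rrep y))"

lemma gp: "y \<in> S \<Longrightarrow> gp y \<in> H (ide y) \<and> y = f (f (lrep y) (gp y)) (rrep y)"
proof -
  assume y: "y \<in> S"
  have i: "idem (ide y)" using ide y by blast
  have l: "lrep y \<in> S" "eqL (lrep y) (ide y)" "eqR y (lrep y)" using lrep[OF y] eqR_sym by auto
  have r: "rrep y \<in> S" "eqR (rrep y) (ide y)" "eqL y (rrep y)" using rrep[OF y] eqL_sym by auto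
  show ?thesis unfolding gp_def using green_decomp[OF i l(1,2) r(1,2) y l(3) r(3)] .
qed

definition hgt where "hgt y = card {I \<in> Jid ` S. I \<subseteq> Jid y}"

lemma Jid_mono: "leJ x y \<Longrightarrow> y \<in> S \<Longrightarrow> Jid x \<subseteq> Jid y"
  unfolding Jid_def using leJ_trans[of _ x y] by blast

lemma hgt_mono: "x \<in> S \<Longrightarrow> y \<in> S \<Longrightarrow> leJ x y \<Longrightarrow> hgt x \<le> hgt y"
proof -
  assume a: "x \<in> S" "y \<in> S" "leJ x y"
  have "{I \<in> Jid ` S. I \<subseteq> Jid x} \<subseteq> {I \<in> Jid ` S. I \<subseteq> Jid y}" using Jid_mono[OF a(3,2)] by blast
  moreover have "finite {I \<in> Jid ` S. I \<subseteq> Jid y}" using fin_Jid by simp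
  ultimately show ?thesis unfolding hgt_def by (rule card_mono[rotated])
qed

lemma hgt_strict: "x \<in> S \<Longrightarrow> y \<in> S \<Longrightarrow> leJ x y \<Longrightarrow> \<not> leJ y x \<Longrightarrow> hgt x < hgt y"
proof -
  assume xy: "x \<in> S" "y \<in> S" "leJ x y" "\<not> leJ y x"
  let ?A = "{I \<in> Jid ` S. I \<subseteq> Jid x}" and ?B = "{I \<in> Jid ` S. I \<subseteq> Jid y}"
  have fin: "finite ?B" by (rule finite_subset[OF _ fin_Jid]) (rule subsetI, erule CollectE, erule conjunct1)
  have nin: "Jid y \<notin> ?A"
  proof
    assume "Jid y \<in> ?A"
    then have "Jid y \<subseteq> Jid x" by blast
    moreover have "y \<in> Jid y" using leJ_refl[of y] xy(2) unfolding Jid_def by blast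
    ultimately have "y \<in> Jid x" by blast
    then show False using xy(4) unfolding Jid_def by blast
  qed
  have inn: "Jid y \<in> ?B" using xy(2) by (simp add: image_eqI)
  have sub: "?A \<subseteq> ?B" using Jid_mono[OF xy(3,2)] by blast
  have ne: "?A \<noteq> ?B" using nin inn by (rule_tac notI) simp
  have "?A \<subset> ?B" using sub ne by (rule psubsetI)
  then show ?thesis unfolding hgt_def by (rule psubset_card_mono[OF fin])
qed

lemma hgt_eqJ: "x \<in> S \<Longrightarrow> y \<in> S \<Longrightarrow> eqJ x y \<Longrightarrow> hgt x = hgt y"
proof -
  assume a: "x \<in> S" "y \<in> S" "eqJ x y"
  have "hgt x \<le> hgt y" "hgt y \<le> hgt x" using hgt_mono[of x y] hgt_mono[of y x] a unfolding eqJ_def by auto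
  then show ?thesis by simp
qed

lemma hgt_ide: "y \<in> S \<Longrightarrow> hgt (ide y) = hgt y"
  using hgt_eqJ[of "ide y" y] ide[of y] ide_S[of y] by blast

lemma prod_cases:
  assumes x: "x \<in> S" and y: "y \<in> S"
  shows "(eqJ (f x y) x \<and> eqJ (f x y) y \<and> ide x = ide y) \<or> hgt (f x y) < max (hgt x) (hgt y)"
proof (cases "leJ x (f x y) \<and> leJ y (f x y)")
  case True
  have J: "eqJ (f x y) x" "eqJ (f x y) y" unfolding eqJ_def using leJ_prod1[OF x y] leJ_prod2[OF x y] True by auto
  then have "eqJ x y" using eqJ_trans[of x "f x y" y] eqJ_sym[of "f x y" x] y by blast
  then have "ide x = ide y" using ide_cong x y by blast
  then show ?thesis using J by blast
next
  case False
  have xyS: "f x y \<in> S" using x y by simp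
  from False consider "\<not> leJ x (f x y)" | "\<not> leJ y (f x y)" by blast
  then show ?thesis
  proof cases
    case 1
    then have "hgt (f x y) < hgt x" using hgt_strict[OF xyS x leJ_prod1[OF x y]] by blast
    then show ?thesis by (intro disjI2) (simp add: less_max_iff_disj)
  next
    case 2
    then have "hgt (f x y) < hgt y" using hgt_strict[OF xyS y leJ_prod2[OF x y]] by blast
    then show ?thesis by (intro disjI2) (simp add: less_max_iff_disj)
  qed
qed

text \<open>An injective ranking of the idempotent representatives compatible with heights.\<close>

definition idn_K :: "('a \<Rightarrow> nat) \<times> nat" where "idn_K = (SOME p. fst p ` E = {i. i < snd p} \<and> inj_on (fst p) E)"
definition rk where "rk e = hgt e * snd idn_K + fst idn_K e"

lemma idn_K: "fst idn_K ` E = {i::nat. i < snd idn_K} \<and> inj_on (fst idn_K) E"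
proof -
  have "\<exists>(g::'a \<Rightarrow> nat) n. g ` E = {i. i < n} \<and> inj_on g E" by (rule finite_imp_inj_to_nat_seg[OF finite_E])
  then obtain g and n :: nat where "g ` E = {i. i < n}" "inj_on g E" by (elim exE conjE)
  then have "(\<lambda>p. fst p ` E = {i. i < snd p} \<and> inj_on (fst p) E) (g, n)" by simp
  then show ?thesis unfolding idn_K_def by (rule someI)
qed

lemma idn_lt: "e \<in> E \<Longrightarrow> fst idn_K e < snd idn_K"
proof -
  assume "e \<in> E"
  then have "fst idn_K e \<in> fst idn_K ` E" by (rule imageI)
  then have "fst idn_K e \<in> {i. i < snd idn_K}" by (simp only: conjunct1[OF idn_K])
  then show ?thesis by simp
qed

lemma rk_less: "e \<in> E \<Longrightarrow> e' \<in> E \<Longrightarrow> hgt e < hgt e' \<Longrightarrow> rk e < rk e'"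
proof -
  assume a: "e \<in> E" "e' \<in> E" "hgt e < hgt e'"
  let ?K = "snd idn_K"
  have "rk e < hgt e * ?K + ?K" unfolding rk_def using idn_lt a by simp
  also have "\<dots> = Suc (hgt e) * ?K" by simp
  also have "\<dots> \<le> hgt e' * ?K" by (rule mult_le_mono1) (use a(3) in simp)
  also have "\<dots> \<le> rk e'" unfolding rk_def by simp
  finally show ?thesis .
qed

lemma rk_inj: "e \<in> E \<Longrightarrow> e' \<in> E \<Longrightarrow> rk e = rk e' \<Longrightarrow> e = e'"
proof -
  assume a: "e \<in> E" "e' \<in> E" "rk e = rk e'"
  have "hgt e = hgt e'"
  proof (rule ccontr)
    assume "hgt e \<noteq> hgt e'"
    then consider "hgt e < hgt e'" | "hgt e' < hgt e" by linarith
    then show False using rk_less[of e e'] rk_less[of e' e] a by cases auto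
  qed
  then have "fst idn_K e = fst idn_K e'" using a unfolding rk_def by simp
  then show ?thesis using conjunct2[OF idn_K] a by (simp add: inj_on_eq_iff)
qed

end


locale rsgp = rsg +
  assumes hyp: "\<forall>H. maximal_subgroup S f H \<longrightarrow> has_finite_complete_presentation H f"
begin

definition GP :: "'a \<Rightarrow> nat set \<times> (nat list \<times> nat list) set \<times> (nat list \<Rightarrow> 'a)" where
  "GP e = (SOME t. finite_complete_rws (fst t) (fst (snd t)) \<and> pres_map (fst t) (fst (snd t)) (H e) f (snd (snd t)))"

definition GX where "GX e = fst (GP e)"
definition GR where "GR e = fst (snd (GP e))"
definition Gp where "Gp e = snd (snd (GP e))"

lemma GP: "e \<in> E \<Longrightarrow> finite_complete_rws (GX e) (GR e) \<and> pres_map (GX e) (GR e) (H e) f (Gp e)"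
proof -
  assume e: "e \<in> E"
  have "maximal_subgroup S f (H e)" using H_maximal E_idem e by blast
  then have "has_finite_complete_presentation (H e) f" using hyp by blast
  then obtain X0 R0 \<psi> where "finite_complete_rws X0 R0" "pres_map X0 R0 (H e) f \<psi>"
    unfolding has_finite_complete_presentation_def presents_iff by blast
  then have "(\<lambda>t. finite_complete_rws (fst t) (fst (snd t)) \<and> pres_map (fst t) (fst (snd t)) (H e) f (snd (snd t))) (X0, R0, \<psi>)"
    by simp
  then have "(\<lambda>t. finite_complete_rws (fst t) (fst (snd t)) \<and> pres_map (fst t) (fst (snd t)) (H e) f (snd (snd t))) (GP e)"
    unfolding GP_def by (rule someI)
  then show ?thesis unfolding GX_def GR_def Gp_def by simp
qed

lemma GP_fcr: "e \<in> E \<Longrightarrow> finite_complete_rws (GX e) (GR e)" using GP by blast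
lemma GP_pres: "e \<in> E \<Longrightarrow> pres_map (GX e) (GR e) (H e) f (Gp e)" using GP by blast
lemma GP_ok: "e \<in> E \<Longrightarrow> rules_ok (GX e) (GR e)" using GP_fcr fcr_ok by blast
lemma GX_fin: "e \<in> E \<Longrightarrow> finite (GX e)" using GP_fcr unfolding finite_complete_rws_def by blast
lemma GR_fin: "e \<in> E \<Longrightarrow> finite (GR e)" using GP_fcr unfolding finite_complete_rws_def by blast
lemma Gp_H: "e \<in> E \<Longrightarrow> w \<in> lists (GX e) \<Longrightarrow> w \<noteq> [] \<Longrightarrow> Gp e w \<in> H e"
  using GP_pres unfolding pres_map_def by blast
lemma Gp_hom: "e \<in> E \<Longrightarrow> u \<in> lists (GX e) \<Longrightarrow> u \<noteq> [] \<Longrightarrow> v \<in> lists (GX e) \<Longrightarrow> v \<noteq> []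
   \<Longrightarrow> Gp e (u @ v) = f (Gp e u) (Gp e v)"
  using GP_pres unfolding pres_map_def by blast

definition okab where "okab e a b \<longleftrightarrow> e \<in> E \<and> a \<in> lrep ` S \<and> eqL a e \<and> b \<in> rrep ` S \<and> eqR b e"

definition Desc :: "('a \<times> nat \<times> 'a \<times> 'a) set" where
  "Desc = {(e, x, a, b). okab e a b \<and> x \<in> GX e}"

lemma finite_Desc: "finite Desc"
proof -
  have "Desc \<subseteq> Sigma E (\<lambda>e. GX e \<times> (lrep ` S \<times> rrep ` S))" unfolding Desc_def okab_def by auto
  moreover have "finite (Sigma E (\<lambda>e. GX e \<times> (lrep ` S \<times> rrep ` S)))"
    using finite_E GX_fin fin_lrep fin_rrep by (intro finite_SigmaI finite_cartesian_product) auto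
  ultimately show ?thesis by (rule finite_subset)
qed

definition enc :: "'a \<times> nat \<times> 'a \<times> 'a \<Rightarrow> nat" where "enc = (SOME g. inj_on g Desc)"

lemma enc_inj: "inj_on enc Desc"
proof -
  have "\<exists>(g :: 'a \<times> nat \<times> 'a \<times> 'a \<Rightarrow> nat) n. g ` Desc = {i. i < n} \<and> inj_on g Desc"
    by (rule finite_imp_inj_to_nat_seg[OF finite_Desc])
  then obtain g :: "'a \<times> nat \<times> 'a \<times> 'a \<Rightarrow> nat" where "inj_on g Desc" by blast
  then show ?thesis unfolding enc_def by (rule someI[where P="\<lambda>g. inj_on g Desc"])
qed

definition X where "X = enc ` Desc"
definition dec where "dec n = inv_into Desc enc n"

lemma finite_X: "finite X" unfolding X_def using finite_Desc by simp

lemma dec: "n \<in> X \<Longrightarrow> dec n \<in> Desc \<and> enc (dec n) = n"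
  unfolding X_def dec_def by (auto intro: inv_into_into f_inv_into_f)
lemma dec_enc: "d \<in> Desc \<Longrightarrow> dec (enc d) = d"
  unfolding dec_def using enc_inj by (simp add: inv_into_f_f)
lemma enc_X: "d \<in> Desc \<Longrightarrow> enc d \<in> X" unfolding X_def by simp

definition cls where "cls n = fst (dec n)"
definition sy where "sy n = fst (snd (dec n))"
definition lt where "lt n = fst (snd (snd (dec n)))"
definition rt where "rt n = snd (snd (snd (dec n)))"

lemma dec_split: "n \<in> X \<Longrightarrow> dec n = (cls n, sy n, lt n, rt n)"
  unfolding cls_def sy_def lt_def rt_def by simp

lemma letter: "n \<in> X \<Longrightarrow> okab (cls n) (lt n) (rt n) \<and> sy n \<in> GX (cls n)"
  using dec[of n] dec_split[of n] unfolding Desc_def by auto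

lemma enc_dec_letter: "n \<in> X \<Longrightarrow> enc (cls n, sy n, lt n, rt n) = n"
  using dec dec_split by metis

lemma letter_enc: "(e, x, a, b) \<in> Desc \<Longrightarrow> cls (enc (e, x, a, b)) = e \<and> sy (enc (e, x, a, b)) = x
   \<and> lt (enc (e, x, a, b)) = a \<and> rt (enc (e, x, a, b)) = b"
  unfolding cls_def sy_def lt_def rt_def using dec_enc by simp

lemma okab_S: "okab e a b \<Longrightarrow> e \<in> S \<and> a \<in> S \<and> b \<in> S \<and> idem e"
  unfolding okab_def using E_S E_idem lrep rrep by blast

lemma okab_e: "e \<in> E \<Longrightarrow> okab e e e"
  unfolding okab_def using lrep_E rrep_E E_S eqL_refl eqR_refl by (metis image_eqI)

lemma okab_left: "okab e a b \<Longrightarrow> okab e a e" using okab_e unfolding okab_def by blast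
lemma okab_right: "okab e a b \<Longrightarrow> okab e e b" using okab_e unfolding okab_def by blast

definition lv where "lv n = f (f (lt n) (Gp (cls n) [sy n])) (rt n)"

lemma lv_S: "n \<in> X \<Longrightarrow> lv n \<in> S"
proof -
  assume n: "n \<in> X"
  then have "Gp (cls n) [sy n] \<in> H (cls n)" using letter Gp_H okab_def by auto
  then show ?thesis unfolding lv_def using letter[OF n] okab_S H_def by auto
qed

fun val :: "nat list \<Rightarrow> 'a" where
  "val [] = undefined"
| "val [n] = lv n"
| "val (n # m # w) = f (lv n) (val (m # w))"

lemma val_S: "w \<in> lists X \<Longrightarrow> w \<noteq> [] \<Longrightarrow> val w \<in> S"
  by (induction w rule: val.induct) (auto simp: lv_S)

lemma val_append: "u \<in> lists X \<Longrightarrow> u \<noteq> [] \<Longrightarrow> v \<in> lists X \<Longrightarrow> v \<noteq> [] \<Longrightarrow> val (u @ v) = f (val u) (val v)"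
proof (induction u rule: val.induct)
  case 1 then show ?case by simp
next
  case (2 n) then show ?case by (cases v) auto
next
  case (3 n m w)
  have "val ((n # m # w) @ v) = f (lv n) (val ((m # w) @ v))" by simp
  also have "\<dots> = f (lv n) (f (val (m # w)) (val v))" using 3 by simp
  also have "\<dots> = f (f (lv n) (val (m # w))) (val v)" using 3 lv_S val_S by simp
  finally show ?case by simp
qed

fun tag :: "'a \<Rightarrow> nat list \<Rightarrow> 'a \<Rightarrow> 'a \<Rightarrow> nat list" where
  "tag e [] a b = []"
| "tag e [x] a b = [enc (e, x, a, b)]"
| "tag e (x # y # w) a b = enc (e, x, a, e) # tag e (y # w) e b"

lemma tag_lists: "okab e a b \<Longrightarrow> u \<in> lists (GX e) \<Longrightarrow> tag e u a b \<in> lists X"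
proof (induction e u a b rule: tag.induct)
  case (2 e x a b) then show ?case using enc_X unfolding Desc_def by auto
next
  case (3 e x y w a b)
  then have "enc (e, x, a, e) \<in> X" using enc_X okab_left unfolding Desc_def by auto
  then show ?case using 3 okab_right by auto
qed simp

lemma tag_len: "length (tag e u a b) = length u"
  by (induction e u a b rule: tag.induct) auto

lemma tag_Nil: "tag e u a b = [] \<longleftrightarrow> u = []"
  using tag_len by (metis length_0_conv)

lemma tag_cls: "okab e a b \<Longrightarrow> u \<in> lists (GX e) \<Longrightarrow> n \<in> set (tag e u a b) \<Longrightarrow> cls n = e"
proof (induction e u a b rule: tag.induct)
  case (2 e x a b) then show ?case using letter_enc unfolding Desc_def by auto
next
  case (3 e x y w a b)
  have "cls (enc (e, x, a, e)) = e" using letter_enc 3 okab_left unfolding Desc_def by auto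
  then show ?case using 3 okab_right by auto
qed simp

lemma tag_sy: "okab e a b \<Longrightarrow> u \<in> lists (GX e) \<Longrightarrow> map sy (tag e u a b) = u"
proof (induction e u a b rule: tag.induct)
  case (2 e x a b) then show ?case using letter_enc unfolding Desc_def by auto
next
  case (3 e x y w a b)
  have "sy (enc (e, x, a, e)) = x" using letter_enc 3 okab_left unfolding Desc_def by auto
  then show ?case using 3 okab_right by auto
qed simp

lemma tag_append: "u \<noteq> [] \<Longrightarrow> v \<noteq> [] \<Longrightarrow> tag e (u @ v) a b = tag e u a e @ tag e v e b"
proof (induction e u a b rule: tag.induct)
  case (2 e x a b) then show ?case by (cases v) auto
next
  case (3 e x y w a b) then show ?case by simp
qed simp

lemma tag_val: "okab e a b \<Longrightarrow> u \<in> lists (GX e) \<Longrightarrow> u \<noteq> [] \<Longrightarrow> val (tag e u a b) = f (f a (Gp e u)) b"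
proof (induction e u a b rule: tag.induct)
  case (2 e x a b)
  then have "(e, x, a, b) \<in> Desc" unfolding Desc_def by simp
  then show ?case using letter_enc by (simp add: lv_def)
next
  case (3 e x y w a b)
  have ok: "okab e a e" "okab e e b" using okab_left okab_right 3 by auto
  have e: "e \<in> E" using 3 unfolding okab_def by blast
  have S: "e \<in> S" "a \<in> S" "b \<in> S" "idem e" using okab_S 3 by auto
  have gx: "Gp e [x] \<in> H e" "Gp e (y # w) \<in> H e" using Gp_H e 3 by auto
  have gxS: "Gp e [x] \<in> S" "Gp e (y # w) \<in> S" using gx unfolding H_def by auto
  have u: "f (Gp e [x]) e = Gp e [x]" "f e (Gp e (y # w)) = Gp e (y # w)" using H_unit S(4) gx by auto
  have "(e, x, a, e) \<in> Desc" using ok 3 unfolding Desc_def by simp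
  then have l: "lv (enc (e, x, a, e)) = f (f a (Gp e [x])) e"
    using letter_enc unfolding lv_def by simp
  have "val (tag e (x # y # w) a b) = f (lv (enc (e, x, a, e))) (val (tag e (y # w) e b))"
    by (cases w) auto
  also have "\<dots> = f (f (f a (Gp e [x])) e) (f (f e (Gp e (y # w))) b)" using l 3 ok by simp
  also have "\<dots> = f (f a (f (f (Gp e [x]) e) (f e (Gp e (y # w))))) b" using S gxS by simp
  also have "\<dots> = f (f a (f (Gp e [x]) (Gp e (y # w)))) b" by (simp only: u)
  also have "\<dots> = f (f a (Gp e (x # y # w))) b" using Gp_hom[of e "[x]" "y # w"] e 3 by simp
  finally show ?case .
qed simp

definition cnt :: "nat list \<Rightarrow> nat" where
  "cnt w = length (filter (\<lambda>n. lt n \<noteq> cls n) w) + length (filter (\<lambda>n. rt n \<noteq> cls n) w)"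

lemma cnt_append: "cnt (u @ v) = cnt u + cnt v" unfolding cnt_def by simp
lemma cnt_Cons: "cnt (n # v) = cnt [n] + cnt v" unfolding cnt_def by simp

lemma tag_cnt: "okab e a b \<Longrightarrow> u \<in> lists (GX e) \<Longrightarrow> u \<noteq> [] \<Longrightarrow>
  cnt (tag e u a b) = (if a = e then 0 else 1) + (if b = e then 0 else 1)"
proof (induction e u a b rule: tag.induct)
  case (2 e x a b) then show ?case using letter_enc unfolding Desc_def cnt_def by auto
next
  case (3 e x y w a b)
  have ok: "okab e a e" "okab e e b" using okab_left okab_right 3 by auto
  have l: "lt (enc (e, x, a, e)) = a" "rt (enc (e, x, a, e)) = e" "cls (enc (e, x, a, e)) = e"
    using letter_enc ok 3 unfolding Desc_def by auto
  have "cnt (tag e (x # y # w) a b) = cnt [enc (e, x, a, e)] + cnt (tag e (y # w) e b)"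
    by (simp only: tag.simps cnt_Cons[of _ "tag e (y # w) e b"])
  also have "\<dots> = (if a = e then 0 else 1) + (if b = e then 0 else 1)"
    using 3 ok l unfolding cnt_def by auto
  finally show ?case .
qed simp

end


context rsgp begin

definition nf where "nf e g = (SOME w. w \<in> lists (GX e) \<and> w \<noteq> [] \<and> irred (GX e) (GR e) w \<and> Gp e w = g)"

lemma nf: "e \<in> E \<Longrightarrow> g \<in> H e \<Longrightarrow> nf e g \<in> lists (GX e) \<and> nf e g \<noteq> [] \<and> irred (GX e) (GR e) (nf e g) \<and> Gp e (nf e g) = g"
proof -
  assume e: "e \<in> E" and g: "g \<in> H e"
  obtain w where "w \<in> lists (GX e) - {[]}" "irred (GX e) (GR e) w" "Gp e w = g"
    using nf_exists[OF GP_fcr[OF e] GP_pres[OF e] g] by blast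
  then have "w \<in> lists (GX e) \<and> w \<noteq> [] \<and> irred (GX e) (GR e) w \<and> Gp e w = g" by simp
  then show ?thesis unfolding nf_def by (rule someI[where P="\<lambda>w. w \<in> lists (GX e) \<and> w \<noteq> [] \<and> irred (GX e) (GR e) w \<and> Gp e w = g"])
qed

lemma nf_unique: "e \<in> E \<Longrightarrow> u \<in> lists (GX e) \<Longrightarrow> u \<noteq> [] \<Longrightarrow> irred (GX e) (GR e) u \<Longrightarrow> nf e (Gp e u) = u"
proof -
  assume e: "e \<in> E" and u: "u \<in> lists (GX e)" "u \<noteq> []" "irred (GX e) (GR e) u"
  have g: "Gp e u \<in> H e" using Gp_H e u by blast
  show ?thesis using irred_unique[OF GP_fcr[OF e] GP_pres[OF e], of "nf e (Gp e u)" u] nf[OF e g] u by auto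
qed

definition NF where "NF y = tag (ide y) (nf (ide y) (gp y)) (lrep y) (rrep y)"

lemma okab_y: "y \<in> S \<Longrightarrow> okab (ide y) (lrep y) (rrep y)"
  unfolding okab_def using ide_E lrep rrep by blast

lemma NF: "y \<in> S \<Longrightarrow> NF y \<in> lists X \<and> NF y \<noteq> [] \<and> val (NF y) = y \<and> (\<forall>n\<in>set (NF y). cls n = ide y)"
proof -
  assume y: "y \<in> S"
  have ok: "okab (ide y) (lrep y) (rrep y)" using okab_y y by blast
  have e: "ide y \<in> E" using ide_E y by blast
  have g: "gp y \<in> H (ide y)" using gp y by blast
  have n: "nf (ide y) (gp y) \<in> lists (GX (ide y))" "nf (ide y) (gp y) \<noteq> []" "Gp (ide y) (nf (ide y) (gp y)) = gp y"
    using nf[OF e g] by auto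
  have "val (NF y) = f (f (lrep y) (gp y)) (rrep y)" unfolding NF_def using tag_val[OF ok n(1,2)] n(3) by simp
  also have "\<dots> = y" using gp y by simp
  finally show ?thesis unfolding NF_def using tag_lists[OF ok n(1)] tag_Nil n(2) tag_cls[OF ok n(1)] by blast
qed

lemma NF_tag:
  assumes ok: "okab e a b" and u: "u \<in> lists (GX e)" "u \<noteq> []" "irred (GX e) (GR e) u"
  shows "NF (f (f a (Gp e u)) b) = tag e u a b"
proof -
  let ?g = "Gp e u" let ?y = "f (f a ?g) b"
  have e: "e \<in> E" using ok okab_def by blast
  have S: "e \<in> S" "a \<in> S" "b \<in> S" "idem e" using okab_S ok by auto
  have aL: "eqL a e" and bR: "eqR b e" using ok okab_def by auto
  have g: "?g \<in> H e" using Gp_H e u by blast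
  have y: "?y \<in> S" "eqR ?y a" "eqL ?y b" using green_compose[OF S(4) S(2) aL S(3) bR g] by auto
  have "eqJ ?y e" using eqJ_trans[OF eqR_eqJ[OF y(2) S(2)] eqL_eqJ[OF aL S(1)] S(1)] .
  then have ide: "ide ?y = e" using ide_cong[OF y(1) S(1)] E_ide e by simp
  obtain a0 where a0: "a0 \<in> S" "a = lrep a0" using ok okab_def by blast
  obtain b0 where b0: "b0 \<in> S" "b = rrep b0" using ok okab_def by blast
  have la: "lrep a = a" using lrep_lrep a0 by simp
  have rb: "rrep b = b" using rrep_rrep b0 by simp
  have ly: "lrep ?y = a" using lrep_cong[OF y(1) S(2) y(2)] la by simp
  have ry: "rrep ?y = b" using rrep_cong[OF y(1) S(3) y(3)] rb by simp
  have "gp ?y = ?g" unfolding gp_def ide ly ry using green_unique[OF S(4) S(2) aL S(3) bR g refl] .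
  then show ?thesis unfolding NF_def ide ly ry using nf_unique[OF e u] by simp
qed

text \<open>The rewriting system.\<close>

definition ok_pair where "ok_pair c d \<longleftrightarrow> cls c = cls d \<and> rt c = cls c \<and> lt d = cls d"

definition T1 where "T1 = {(tag e u a b, tag e v a b) | e u v a b. okab e a b \<and> (u, v) \<in> GR e}"
definition T2 where "T2 = {([c, d], NF (f (lv c) (lv d))) | c d. c \<in> X \<and> d \<in> X \<and> \<not> ok_pair c d}"
definition Rn where "Rn = T1 \<union> T2"

lemma finite_Rn: "finite Rn"
proof -
  have "T1 \<subseteq> (\<lambda>(e, (u, v), a, b). (tag e u a b, tag e v a b)) ` (Sigma E (\<lambda>e. GR e \<times> (lrep ` S \<times> rrep ` S)))"
  proof
    fix p assume "p \<in> T1"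
    then obtain e u v a b where p: "p = (tag e u a b, tag e v a b)" "okab e a b" "(u, v) \<in> GR e"
      unfolding T1_def by blast
    then have m: "(e, (u, v), a, b) \<in> Sigma E (\<lambda>e. GR e \<times> (lrep ` S \<times> rrep ` S))" unfolding okab_def by auto
    have "p = (\<lambda>(e, (u, v), a, b). (tag e u a b, tag e v a b)) (e, (u, v), a, b)" using p by simp
    then show "p \<in> (\<lambda>(e, (u, v), a, b). (tag e u a b, tag e v a b)) ` (Sigma E (\<lambda>e. GR e \<times> (lrep ` S \<times> rrep ` S)))"
      using m by (rule image_eqI)
  qed
  moreover have "finite (Sigma E (\<lambda>e. GR e \<times> (lrep ` S \<times> rrep ` S)))"
    using finite_E GR_fin fin_lrep fin_rrep by (intro finite_SigmaI finite_cartesian_product) auto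
  ultimately have "finite T1" using finite_subset by blast
  moreover have "T2 \<subseteq> (\<lambda>(c, d). ([c, d], NF (f (lv c) (lv d)))) ` (X \<times> X)"
    unfolding T2_def by auto
  then have "finite T2" using finite_X finite_subset by blast
  ultimately show ?thesis unfolding Rn_def by simp
qed

lemma GR_rule: "e \<in> E \<Longrightarrow> (u, v) \<in> GR e \<Longrightarrow> u \<in> lists (GX e) \<and> u \<noteq> [] \<and> v \<in> lists (GX e) \<and> v \<noteq> []"
  using GP_ok unfolding rules_ok_def by blast

lemma Rn_ok: "rules_ok X Rn"
  unfolding rules_ok_def
proof (intro ballI, clarify)
  fix u v assume "(u, v) \<in> Rn"
  then consider "(u, v) \<in> T1" | "(u, v) \<in> T2" unfolding Rn_def by blast
  then show "u \<in> lists X \<and> u \<noteq> [] \<and> v \<in> lists X \<and> v \<noteq> []"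
  proof cases
    case 1
    then obtain e l r a b where x: "u = tag e l a b" "v = tag e r a b" "okab e a b" "(l, r) \<in> GR e"
      unfolding T1_def by blast
    have "e \<in> E" using x okab_def by blast
    then show ?thesis using x GR_rule tag_lists tag_Nil by metis
  next
    case 2
    then obtain c d where x: "u = [c, d]" "v = NF (f (lv c) (lv d))" "c \<in> X" "d \<in> X"
      unfolding T2_def by blast
    then show ?thesis using NF lv_S by auto
  qed
qed

lemma Rn_val: "(u, v) \<in> Rn \<Longrightarrow> val u = val v"
proof -
  assume "(u, v) \<in> Rn"
  then consider "(u, v) \<in> T1" | "(u, v) \<in> T2" unfolding Rn_def by blast
  then show "val u = val v"
  proof cases
    case 1
    then obtain e l r a b where x: "u = tag e l a b" "v = tag e r a b" "okab e a b" "(l, r) \<in> GR e"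
      unfolding T1_def by blast
    have e: "e \<in> E" using x okab_def by blast
    have lr: "l \<in> lists (GX e)" "l \<noteq> []" "r \<in> lists (GX e)" "r \<noteq> []" using GR_rule e x by auto
    have "(l, r) \<in> rw_step (GX e) (GR e)" unfolding rw_step_def using x(4)
      by (rule_tac CollectI, rule_tac x="[]" in exI, rule_tac x=l in exI, rule_tac x=r in exI, rule_tac x="[]" in exI) simp
    then have "Gp e l = Gp e r" using step_val[OF GP_pres[OF e] GP_ok[OF e]] by blast
    then show ?thesis using x tag_val lr by simp
  next
    case 2
    then obtain c d where x: "u = [c, d]" "v = NF (f (lv c) (lv d))" "c \<in> X" "d \<in> X"
      unfolding T2_def by blast
    then show ?thesis using NF lv_S by auto
  qed
qed

lemma step_val_X: "(x, y) \<in> rw_step X Rn \<Longrightarrow> val x = val y"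
proof -
  assume "(x, y) \<in> rw_step X Rn"
  then obtain w1 u v w2 where x: "x = w1 @ u @ w2" "y = w1 @ v @ w2" "(u, v) \<in> Rn" "w1 \<in> lists X" "w2 \<in> lists X"
    unfolding rw_step_def by blast
  have uv: "u \<in> lists X" "u \<noteq> []" "v \<in> lists X" "v \<noteq> []" using Rn_ok x(3) unfolding rules_ok_def by auto
  have "val (u @ w2) = val (v @ w2)"
    using Rn_val[OF x(3)] uv x(5) val_append by (cases "w2 = []") auto
  moreover have "u @ w2 \<in> lists X" "u @ w2 \<noteq> []" "v @ w2 \<in> lists X" "v @ w2 \<noteq> []" using uv x by auto
  ultimately show ?thesis using x(1,2,4) val_append by (cases "w1 = []") auto
qed

lemma steps_val_X: "(x, y) \<in> (rw_step X Rn)\<^sup>* \<Longrightarrow> val x = val y"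
  by (induction rule: rtrancl_induct) (auto dest: step_val_X)

lemma rw_step_intro: "(u, v) \<in> R \<Longrightarrow> w1 \<in> lists Y \<Longrightarrow> w2 \<in> lists Y \<Longrightarrow> (w1 @ u @ w2, w1 @ v @ w2) \<in> rw_step Y R"
  unfolding rw_step_def by blast

text \<open>Irreducible words are normal forms.\<close>

fun chain :: "nat list \<Rightarrow> bool" where
  "chain [] = True"
| "chain [c] = True"
| "chain (c # d # w) = (ok_pair c d \<and> chain (d # w))"

lemma irred_chain: "w \<in> lists X \<Longrightarrow> irred X Rn w \<Longrightarrow> chain w"
proof (induction w rule: chain.induct)
  case (3 c d w)
  have cd: "ok_pair c d"
  proof (rule ccontr)
    assume "\<not> ok_pair c d"
    then have "([c, d], NF (f (lv c) (lv d))) \<in> Rn" unfolding Rn_def T2_def using 3 by auto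
    then have "([] @ [c, d] @ w, [] @ NF (f (lv c) (lv d)) @ w) \<in> rw_step X Rn"
      by (rule rw_step_intro) (use 3 in auto)
    then show False using 3 unfolding irred_def by auto
  qed
  have "irred X Rn (d # w)"
  proof -
    { fix w' assume "(d # w, w') \<in> rw_step X Rn"
      then have "([c] @ (d # w) @ [], [c] @ w' @ []) \<in> rw_step X Rn"
        by (rule rw_step_ctx) (use 3 in auto)
      then have False using 3 unfolding irred_def by auto }
    then show ?thesis unfolding irred_def by blast
  qed
  then show ?case using 3 cd by auto
qed auto

lemma chain_tag: "w \<in> lists X \<Longrightarrow> w \<noteq> [] \<Longrightarrow> chain w \<Longrightarrow>
  w = tag (cls (hd w)) (map sy w) (lt (hd w)) (rt (last w)) \<and> (\<forall>n\<in>set w. cls n = cls (hd w))"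
proof (induction w rule: chain.induct)
  case (2 c)
  then show ?case using enc_dec_letter by simp
next
  case (3 c d w)
  have ok: "cls c = cls d" "rt c = cls c" "lt d = cls d" using 3 ok_pair_def by auto
  have pre: "d # w \<in> lists X" "d # w \<noteq> []" "chain (d # w)" using "3.prems" by auto
  have IH: "d # w = tag (cls d) (map sy (d # w)) (lt d) (rt (last (d # w)))" "\<forall>n\<in>set (d # w). cls n = cls d"
    using "3.IH"[OF pre] unfolding list.sel by blast+
  have cX: "c \<in> X" using "3.prems" by simp
  have "tag (cls c) (map sy (c # d # w)) (lt c) (rt (last (c # d # w)))
      = enc (cls c, sy c, lt c, cls c) # tag (cls c) (map sy (d # w)) (cls c) (rt (last (d # w)))"
    by simp
  also have "\<dots> = enc (cls c, sy c, lt c, rt c) # tag (cls d) (map sy (d # w)) (lt d) (rt (last (d # w)))"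
    using ok by simp
  also have "\<dots> = c # (d # w)" by (simp only: enc_dec_letter[OF cX] IH(1)[symmetric])
  finally have eq: "c # d # w = tag (cls (hd (c # d # w))) (map sy (c # d # w)) (lt (hd (c # d # w))) (rt (last (c # d # w)))"
    by simp
  show ?case
  proof (rule conjI)
    show "c # d # w = tag (cls (hd (c # d # w))) (map sy (c # d # w)) (lt (hd (c # d # w))) (rt (last (c # d # w)))"
      by (rule eq)
    show "\<forall>n\<in>set (c # d # w). cls n = cls (hd (c # d # w))" using IH(2) ok(1) by simp
  qed
qed simp

lemma irred_NF:
  assumes w: "w \<in> lists X" "w \<noteq> []" and ir: "irred X Rn w"
  shows "NF (val w) = w"
proof -
  let ?e = "cls (hd w)" and ?u = "map sy w" and ?a = "lt (hd w)" and ?b = "rt (last w)"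
  have ch: "chain w" using irred_chain w ir by blast
  have wt: "w = tag ?e ?u ?a ?b" and wc: "\<forall>n\<in>set w. cls n = ?e" using chain_tag[OF w ch] by auto
  have hd: "hd w \<in> X" "last w \<in> X" using w by auto
  have okh: "okab ?e ?a (rt (hd w))" "okab (cls (last w)) (lt (last w)) ?b" using letter hd by auto
  have cl: "cls (last w) = ?e" using bspec[OF wc last_in_set[OF w(2)]] .
  have ok: "okab ?e ?a ?b" using okh(1) okh(2)[unfolded cl] unfolding okab_def by blast
  have e: "?e \<in> E" using ok okab_def by blast
  have u: "?u \<in> lists (GX ?e)" "?u \<noteq> []"
  proof -
    show "?u \<in> lists (GX ?e)"
    proof (subst in_lists_conv_set, intro ballI)
      fix x assume "x \<in> set ?u"
      then obtain n where n: "n \<in> set w" "x = sy n" by auto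
      have "cls n = ?e" using bspec[OF wc n(1)] .
      then show "x \<in> GX ?e" using letter[of n] n w by auto
    qed
    show "?u \<noteq> []" using w by simp
  qed
  have iu: "irred (GX ?e) (GR ?e) ?u"
    unfolding irred_def
  proof
    assume "\<exists>w'. (?u, w') \<in> rw_step (GX ?e) (GR ?e)"
    then obtain p l r q where s: "?u = p @ l @ q" "(l, r) \<in> GR ?e" "p \<in> lists (GX ?e)" "q \<in> lists (GX ?e)"
      unfolding rw_step_def by blast
    have lr: "l \<in> lists (GX ?e)" "l \<noteq> []" "r \<in> lists (GX ?e)" "r \<noteq> []" using GR_rule e s by auto
    define a' where "a' = (if p = [] then ?a else ?e)"
    define b' where "b' = (if q = [] then ?b else ?e)"
    have ok': "okab ?e a' b'" unfolding a'_def b'_def using ok okab_left okab_right okab_e e by auto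
    have dec: "tag ?e (p @ l @ q) ?a ?b = tag ?e p ?a ?e @ tag ?e l a' b' @ tag ?e q ?e ?b"
      unfolding a'_def b'_def using lr by (cases "p = []"; cases "q = []") (simp_all add: tag_append)
    have dec2: "tag ?e (p @ r @ q) ?a ?b = tag ?e p ?a ?e @ tag ?e r a' b' @ tag ?e q ?e ?b"
      unfolding a'_def b'_def using lr by (cases "p = []"; cases "q = []") (simp_all add: tag_append)
    have "(tag ?e l a' b', tag ?e r a' b') \<in> Rn" unfolding Rn_def T1_def using ok' s(2) by blast
    moreover have "tag ?e p ?a ?e \<in> lists X" "tag ?e q ?e ?b \<in> lists X"
      using tag_lists okab_left okab_right ok s by auto
    ultimately have "(w, tag ?e (p @ r @ q) ?a ?b) \<in> rw_step X Rn"
      unfolding rw_step_def using wt s(1) dec dec2 by auto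
    then show False using ir unfolding irred_def by blast
  qed
  have "val w = f (f ?a (Gp ?e ?u)) ?b" using wt tag_val[OF ok u] by simp
  then have "NF (val w) = tag ?e ?u ?a ?b" using NF_tag[OF ok u iu] by simp
  then show ?thesis using wt by simp
qed

end


fun splitP :: "('b \<Rightarrow> bool) \<Rightarrow> 'b list \<Rightarrow> 'b list list" where
  "splitP P [] = [[]]"
| "splitP P (x # w) = (if P x then (x # hd (splitP P w)) # tl (splitP P w) else [] # splitP P w)"

lemma splitP_ne: "splitP P w \<noteq> []"
  by (cases w) auto

lemma splitP_append:
  "splitP P (u @ v) = butlast (splitP P u) @ [last (splitP P u) @ hd (splitP P v)] @ tl (splitP P v)"
proof (induction u)
  case Nil then show ?case using splitP_ne[of P v] by simp
next
  case (Cons x u)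
  show ?case
  proof (cases "P x")
    case True
    obtain a rest where su: "splitP P u = a # rest" using splitP_ne[of P u] by (cases "splitP P u") auto
    show ?thesis
    proof (cases "rest = []")
      case True
      then show ?thesis using Cons.IH su \<open>P x\<close> by simp
    next
      case False
      then show ?thesis using Cons.IH su \<open>P x\<close> by simp
    qed
  next
    case False
    then show ?thesis using Cons.IH splitP_ne[of P u] by simp
  qed
qed

lemma splitP_allP: "v \<noteq> [] \<Longrightarrow> \<forall>x\<in>set v. P x \<Longrightarrow> splitP P v = [v]"
proof -
  have "\<forall>x\<in>set v. P x \<Longrightarrow> splitP P v = [v]" by (induction v) auto
  then show "v \<noteq> [] \<Longrightarrow> \<forall>x\<in>set v. P x \<Longrightarrow> splitP P v = [v]" by blast
qed

lemma splitP_noP: "\<forall>x\<in>set v. \<not> P x \<Longrightarrow> splitP P v = replicate (Suc (length v)) []"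
  by (induction v) auto

lemma splitP_set: "x \<in> set (splitP P w) \<Longrightarrow> set x \<subseteq> set w \<and> (\<forall>n\<in>set x. P n)"
proof (induction w arbitrary: x)
  case Nil then show ?case by simp
next
  case (Cons y w)
  have ne: "splitP P w \<noteq> []" by (rule splitP_ne)
  show ?case
  proof (cases "P y")
    case True
    then have "x = y # hd (splitP P w) \<or> x \<in> set (tl (splitP P w))" using Cons.prems by auto
    then show ?thesis
    proof
      assume "x = y # hd (splitP P w)"
      moreover have "hd (splitP P w) \<in> set (splitP P w)" using ne by simp
      ultimately show ?thesis using Cons.IH True by fastforce
    next
      assume "x \<in> set (tl (splitP P w))"
      then have "x \<in> set (splitP P w)" by (metis list.set_sel(2) ne)
      then show ?thesis using Cons.IH by fastforce
    qed
  next
    case False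
    then show ?thesis using Cons by fastforce
  qed
qed

definition F :: "'b list list \<Rightarrow> 'b list multiset" where "F xs = mset (filter (\<lambda>x. x \<noteq> []) xs)"

lemma F_append: "F (xs @ ys) = F xs + F ys" unfolding F_def by simp
lemma F_Cons: "F (x # xs) = F [x] + F xs" unfolding F_def by simp
lemma F_single: "x \<noteq> [] \<Longrightarrow> F [x] = {#x#}" unfolding F_def by simp
lemma F_Nil: "F [[]] = {#}" "F [] = {#}" unfolding F_def by simp_all
lemma F_repl: "F (replicate k []) = {#}" unfolding F_def by (induction k) auto

lemma F_elem: "y \<in># F xs \<Longrightarrow> y \<in> set xs \<and> y \<noteq> []" unfolding F_def by simp

definition pcs :: "('b \<Rightarrow> bool) \<Rightarrow> 'b list \<Rightarrow> 'b list multiset" where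
  "pcs P w = F (splitP P w)"

lemma split_last: "splitP P w = butlast (splitP P w) @ [last (splitP P w)]"
  using splitP_ne by (metis append_butlast_last_id)
lemma split_hd: "splitP P w = hd (splitP P w) # tl (splitP P w)"
  using splitP_ne by (metis list.exhaust_sel)

lemma filt_rep: "filter (\<lambda>x. x \<noteq> []) (replicate k []) = []"
  by (induction k) auto
lemma butlast_rep: "butlast (replicate (Suc n) x) = replicate n x"
  by (induction n) auto
lemma last_rep: "last (replicate (Suc n) x) = x"
  by (induction n) auto

lemma pcs_noP:
  assumes "v \<noteq> []" "\<forall>x\<in>set v. \<not> P x"
  shows "pcs P (w1 @ v @ w2) = pcs P w1 + pcs P w2"
proof -
  obtain k where k: "length v = Suc k" using assms(1) by (cases v) auto
  have sv: "splitP P v = replicate (Suc (Suc k)) []" using splitP_noP[OF assms(2)] k by simp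
  have "splitP P (v @ w2) = replicate (Suc k) [] @ [hd (splitP P w2)] @ tl (splitP P w2)"
    using splitP_append[of P v w2] sv by (simp only: butlast_rep last_rep append_Nil append_assoc)
  then have "splitP P (w1 @ v @ w2) = butlast (splitP P w1) @ [last (splitP P w1)] @ replicate k [] @ [hd (splitP P w2)] @ tl (splitP P w2)"
    using splitP_append[of P w1 "v @ w2"] by simp
  then have "F (splitP P (w1 @ v @ w2)) = F (butlast (splitP P w1) @ [last (splitP P w1)]) + F (hd (splitP P w2) # tl (splitP P w2))"
    unfolding F_def by (simp add: filt_rep)
  also have "\<dots> = F (splitP P w1) + F (splitP P w2)" using split_last[of P w1] split_hd[of P w2] by simp
  finally show ?thesis unfolding pcs_def .
qed

lemma pcs_P:
  assumes "v \<noteq> []" "\<forall>x\<in>set v. P x"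
  shows "splitP P (w1 @ v @ w2) = butlast (splitP P w1) @ [last (splitP P w1) @ v @ hd (splitP P w2)] @ tl (splitP P w2)"
proof -
  have "splitP P (v @ w2) = [v @ hd (splitP P w2)] @ tl (splitP P w2)"
    using splitP_append[of P v w2] splitP_allP[OF assms] by simp
  then show ?thesis using splitP_append[of P w1 "v @ w2"] by simp
qed

lemma pcs_Pn:
  assumes "P c" "\<not> P d"
  shows "splitP P (w1 @ [c, d] @ w2) = butlast (splitP P w1) @ [last (splitP P w1) @ [c]] @ [hd (splitP P w2)] @ tl (splitP P w2)"
proof -
  have "splitP P ([c, d] @ w2) = [[c]] @ [hd (splitP P w2)] @ tl (splitP P w2)"
    using assms split_hd[of P w2] by simp
  then show ?thesis using splitP_append[of P w1 "[c, d] @ w2"] by simp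
qed

lemma pcs_nP:
  assumes "\<not> P c" "P d"
  shows "splitP P (w1 @ [c, d] @ w2) = butlast (splitP P w1) @ [last (splitP P w1)] @ [d # hd (splitP P w2)] @ tl (splitP P w2)"
proof -
  have "splitP P ([c, d] @ w2) = [[]] @ [d # hd (splitP P w2)] @ tl (splitP P w2)"
    using assms split_hd[of P w2] by simp
  then show ?thesis using splitP_append[of P w1 "[c, d] @ w2"] by simp
qed

lemma desc_contra:
  assumes wf: "wf r" and tr: "trans r"
    and stp: "\<forall>i\<ge>N. M (Suc i) = M i \<or> (M (Suc i), M i) \<in> r"
    and inf: "\<forall>n. \<exists>i\<ge>n. (M (Suc i), M i) \<in> r"
  shows False
proof -
  have "\<forall>i\<ge>N. M i = m \<longrightarrow> False" for m
  proof (induction m rule: wf_induct[OF wf])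
    case (1 m)
    show ?case
    proof (intro allI impI)
      fix i assume i: "N \<le> i" and Mi: "M i = m"
      obtain j where j: "j \<ge> i" "(M (Suc j), M j) \<in> r" using inf by blast
      have "M j = M i \<or> (M j, M i) \<in> r"
        using j(1)
      proof (induction j rule: dec_induct)
        case base then show ?case by simp
      next
        case (step k)
        then have "M (Suc k) = M k \<or> (M (Suc k), M k) \<in> r" using \<open>N \<le> i\<close> stp by simp
        then show ?case using step.IH tr by (metis transE)
      qed
      then have "(M (Suc j), M i) \<in> r" using j(2) tr by (metis transE)
      then show False using "1" Mi i j(1) by (metis le_SucI order_trans)
    qed
  qed
  then show False by blast
qed



lemma mult_replace:
  "J \<noteq> {#} \<Longrightarrow> (\<forall>k\<in>#K. \<exists>j\<in>#J. (k, j) \<in> r) \<Longrightarrow> new = I + K \<Longrightarrow> old = I + J \<Longrightarrow> (new, old) \<in> mult r"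
  using one_step_implies_mult by blast

lemma F_single_mem: "k \<in># F [p] \<Longrightarrow> k = p" unfolding F_def by (cases "p = []") auto

context rsgp begin

definition PO where "PO e = inv_image (less_than <*lex*> GO (GX e) (GR e)) (\<lambda>x. (cnt x, map sy x))"

lemma wf_PO: "e \<in> E \<Longrightarrow> wf (PO e)"
proof -
  assume e: "e \<in> E"
  have "rw_noetherian (GX e) (GR e)" using GP_fcr[OF e] unfolding finite_complete_rws_def by blast
  then have "wf (GO (GX e) (GR e))" using wf_GO GP_ok[OF e] by blast
  then show ?thesis unfolding PO_def by (intro wf_inv_image wf_lex_prod wf_less_than)
qed

definition pure where "pure e w \<longleftrightarrow> w \<in> lists X \<and> (\<forall>n\<in>set w. cls n = e)"

lemma pure_sy: "pure e w \<Longrightarrow> map sy w \<in> lists (GX e)"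
proof (subst in_lists_conv_set, intro ballI)
  fix x assume p: "pure e w" and "x \<in> set (map sy w)"
  then obtain n where n: "n \<in> set w" "x = sy n" by auto
  have "n \<in> X" "cls n = e" using p n unfolding pure_def by auto
  then show "x \<in> GX e" using letter[of n] n by simp
qed

lemma pure_append: "pure e (u @ v) \<longleftrightarrow> pure e u \<and> pure e v" unfolding pure_def by auto

lemma PO_factor:
  assumes p: "pure e x" and x: "x = a @ y @ b" and ne: "a \<noteq> [] \<or> b \<noteq> []"
  shows "(y, x) \<in> PO e"
proof -
  have c: "cnt x = cnt a + cnt y + cnt b" using x cnt_append by simp
  show ?thesis
  proof (cases "cnt y < cnt x")
    case True then show ?thesis unfolding PO_def by simp
  next
    case False
    then have eq: "cnt y = cnt x" using c by simp
    have "map sy x \<in> lists (GX e)" using pure_sy p by blast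
    moreover have "map sy x = map sy a @ map sy y @ map sy b" using x by simp
    moreover have "map sy a \<noteq> [] \<or> map sy b \<noteq> []" using ne by simp
    ultimately have "(map sy y, map sy x) \<in> PFX (GX e)" unfolding PFX_def by blast
    then have "(map sy y, map sy x) \<in> GO (GX e) (GR e)" unfolding GO_def by blast
    then show ?thesis unfolding PO_def using eq by simp
  qed
qed

lemma lv_J: "n \<in> X \<Longrightarrow> eqR (lv n) (lt n) \<and> eqL (lv n) (rt n) \<and> ide (lv n) = cls n \<and> hgt (lv n) = hgt (cls n)"
proof -
  assume n: "n \<in> X"
  have ok: "okab (cls n) (lt n) (rt n)" and x: "sy n \<in> GX (cls n)" using letter n by auto
  have e: "cls n \<in> E" using ok okab_def by blast
  have S: "cls n \<in> S" "lt n \<in> S" "rt n \<in> S" "idem (cls n)" using okab_S ok by auto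
  have aL: "eqL (lt n) (cls n)" and bR: "eqR (rt n) (cls n)" using ok okab_def by auto
  have g: "Gp (cls n) [sy n] \<in> H (cls n)" using Gp_H e x by simp
  have y: "lv n \<in> S" "eqR (lv n) (lt n)" "eqL (lv n) (rt n)"
    using green_compose[OF S(4) S(2) aL S(3) bR g] unfolding lv_def by auto
  have J: "eqJ (lv n) (cls n)" using eqJ_trans[OF eqR_eqJ[OF y(2) S(2)] eqL_eqJ[OF aL S(1)] S(1)] .
  have "ide (lv n) = cls n" using ide_cong[OF y(1) S(1) J] E_ide[OF e] by simp
  moreover have "hgt (lv n) = hgt (cls n)" using hgt_eqJ[OF y(1) S(1) J] .
  ultimately show ?thesis using y by blast
qed

lemma cnt_single: "cnt [n] = (if lt n = cls n then 0 else 1) + (if rt n = cls n then 0 else 1)"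
  unfolding cnt_def by simp

lemma rule_cases:
  assumes uv: "(u, v) \<in> Rn"
  shows "(\<exists>e\<in>E. pure e u \<and> pure e v \<and> u \<noteq> [] \<and> v \<noteq> [] \<and> (\<forall>p q. pure e p \<longrightarrow> pure e q \<longrightarrow> (p @ v @ q, p @ u @ q) \<in> PO e))
    \<or> (\<exists>c d. u = [c, d] \<and> c \<in> X \<and> d \<in> X \<and> v \<in> lists X \<and> v \<noteq> [] \<and> (\<forall>n\<in>set v. rk (cls n) < max (rk (cls c)) (rk (cls d))))"
proof -
  from uv consider "(u, v) \<in> T1" | "(u, v) \<in> T2" unfolding Rn_def by blast
  then show ?thesis
  proof cases
    case 1
    then obtain e l r a b where x: "u = tag e l a b" "v = tag e r a b" "okab e a b" "(l, r) \<in> GR e"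
      unfolding T1_def by blast
    have e: "e \<in> E" using x okab_def by blast
    have lr: "l \<in> lists (GX e)" "l \<noteq> []" "r \<in> lists (GX e)" "r \<noteq> []" using GR_rule e x by auto
    have pu: "pure e u" "pure e v" unfolding pure_def x using tag_lists tag_cls x(3) lr by blast+
    have ne: "u \<noteq> []" "v \<noteq> []" using x tag_Nil lr by auto
    have cu: "cnt v = cnt u" using x tag_cnt lr by simp
    have su: "map sy u = l" "map sy v = r" using x tag_sy lr by auto
    have "(p @ v @ q, p @ u @ q) \<in> PO e" if "pure e p" "pure e q" for p q
    proof -
      have "(map sy p @ l @ map sy q, map sy p @ r @ map sy q) \<in> rw_step (GX e) (GR e)"
        by (rule rw_step_intro[OF x(4)]) (use pure_sy that in auto)
      then have "(map sy (p @ v @ q), map sy (p @ u @ q)) \<in> GO (GX e) (GR e)" unfolding GO_def using su by simp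
      moreover have "cnt (p @ v @ q) = cnt (p @ u @ q)" using cu cnt_append by simp
      ultimately show ?thesis unfolding PO_def by simp
    qed
    then show ?thesis using e pu ne by blast
  next
    case 2
    then obtain c d where x: "u = [c, d]" "v = NF (f (lv c) (lv d))" "c \<in> X" "d \<in> X" "\<not> ok_pair c d"
      unfolding T2_def by blast
    let ?y = "f (lv c) (lv d)"
    have S: "lv c \<in> S" "lv d \<in> S" "?y \<in> S" using lv_S x by auto
    have lc: "eqR (lv c) (lt c)" "eqL (lv c) (rt c)" "ide (lv c) = cls c" "hgt (lv c) = hgt (cls c)" using lv_J x by auto
    have ld: "eqR (lv d) (lt d)" "eqL (lv d) (rt d)" "ide (lv d) = cls d" "hgt (lv d) = hgt (cls d)" using lv_J x by auto
    have Nv: "v \<in> lists X" "v \<noteq> []" "\<forall>n\<in>set v. cls n = ide ?y" using NF[OF S(3)] x by auto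
    have okc: "okab (cls c) (lt c) (rt c)" and okd: "okab (cls d) (lt d) (rt d)" using letter x by auto
    from prod_cases[OF S(1,2)] show ?thesis
    proof
      assume A: "eqJ ?y (lv c) \<and> eqJ ?y (lv d) \<and> ide (lv c) = ide (lv d)"
      let ?e = "cls c"
      have ecd: "cls d = ?e" using A lc ld by simp
      have e: "?e \<in> E" using okc okab_def by blast
      have iy: "ide ?y = ?e" using ide_cong[OF S(3) S(1)] A lc by simp
      have Ry: "eqR ?y (lt c)" using eqR_trans[OF stabR[OF S(1,2)] lc(1)] A okab_S[OF okc] by blast
      have Ly: "eqL ?y (rt d)" using eqL_trans[OF stabL[OF S(2,1)] ld(2)] A okab_S[OF okd] by blast
      obtain a0 where a0: "a0 \<in> S" "lt c = lrep a0" using okc okab_def by blast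
      obtain b0 where b0: "b0 \<in> S" "rt d = rrep b0" using okd okab_def by blast
      have lr: "lrep ?y = lt c" using lrep_cong[OF S(3) _ Ry] lrep_lrep[OF a0(1)] a0(2) okab_S[OF okc] by simp
      have rr: "rrep ?y = rt d" using rrep_cong[OF S(3) _ Ly] rrep_rrep[OF b0(1)] b0(2) okab_S[OF okd] by simp
      have okv: "okab ?e (lt c) (rt d)" using okc okd ecd unfolding okab_def by auto
      have g: "gp ?y \<in> H ?e" using gp[OF S(3)] iy by simp
      have nfv: "nf ?e (gp ?y) \<in> lists (GX ?e)" "nf ?e (gp ?y) \<noteq> []" using nf[OF e g] by auto
      have vt: "v = tag ?e (nf ?e (gp ?y)) (lt c) (rt d)" using x(2) unfolding NF_def iy lr rr by simp
      have cv: "cnt v = (if lt c = ?e then 0 else 1) + (if rt d = ?e then 0 else 1)"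
        using vt tag_cnt[OF okv nfv] by simp
      have cu: "cnt u = cnt [c] + cnt [d]" using x(1) cnt_append[of "[c]" "[d]"] by simp
      have "rt c \<noteq> ?e \<or> lt d \<noteq> ?e" using x(5) ecd unfolding ok_pair_def by auto
      then have lt: "cnt v < cnt u" using cv cu ecd unfolding cnt_single by auto
      have pu: "pure ?e u" "pure ?e v" unfolding pure_def using x ecd Nv iy by auto
      have "(p @ v @ q, p @ u @ q) \<in> PO ?e" if "pure ?e p" "pure ?e q" for p q
        using lt cnt_append unfolding PO_def by simp
      then show ?thesis using e pu Nv x(1) by blast
    next
      assume B: "hgt ?y < max (hgt (lv c)) (hgt (lv d))"
      have ec: "cls c \<in> E" "cls d \<in> E" using okc okd okab_def by auto
      have ey: "ide ?y \<in> E" using ide_E S(3) by blast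
      have hy: "hgt (ide ?y) = hgt ?y" using hgt_ide S(3) by blast
      have "rk (ide ?y) < max (rk (cls c)) (rk (cls d))"
      proof (cases "hgt (lv d) \<le> hgt (lv c)")
        case True
        then have "hgt (ide ?y) < hgt (cls c)" using B hy lc by simp
        then show ?thesis using rk_less[OF ey ec(1)] by simp
      next
        case False
        then have "hgt (ide ?y) < hgt (cls d)" using B hy ld by simp
        then show ?thesis using rk_less[OF ey ec(2)] by simp
      qed
      then show ?thesis using Nv x by auto
    qed
  qed
qed

end


lemma F_Cons_ne: "x \<noteq> [] \<Longrightarrow> F (x # xs) = add_mset x (F xs)" unfolding F_def by simp
lemma F_Cons_Nil: "F ([] # xs) = F xs" unfolding F_def by simp

context rsgp begin

abbreviation PP where "PP e \<equiv> (\<lambda>n. cls n = e)"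

lemma piece_pure: "w \<in> lists X \<Longrightarrow> x \<in> set (splitP (PP e) w) \<Longrightarrow> pure e x"
  using splitP_set[of x "PP e" w] unfolding pure_def by auto

lemma last_piece_pure: "w \<in> lists X \<Longrightarrow> pure e (last (splitP (PP e) w))"
  using piece_pure splitP_ne by (metis last_in_set)
lemma hd_piece_pure: "w \<in> lists X \<Longrightarrow> pure e (hd (splitP (PP e) w))"
  using piece_pure splitP_ne by (metis list.set_sel(1))

lemma step_internal:
  assumes w: "w1 \<in> lists X" "w2 \<in> lists X"
    and pu: "pure e u" "pure e v" "u \<noteq> []" "v \<noteq> []"
    and po: "\<forall>p q. pure e p \<longrightarrow> pure e q \<longrightarrow> (p @ v @ q, p @ u @ q) \<in> PO e"
  shows "(pcs (PP e) (w1 @ v @ w2), pcs (PP e) (w1 @ u @ w2)) \<in> mult (PO e)"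
proof -
  let ?A = "butlast (splitP (PP e) w1)" and ?p = "last (splitP (PP e) w1)"
    and ?q = "hd (splitP (PP e) w2)" and ?B = "tl (splitP (PP e) w2)"
  have allu: "\<forall>x\<in>set u. PP e x" and allv: "\<forall>x\<in>set v. PP e x" using pu unfolding pure_def by auto
  have su: "splitP (PP e) (w1 @ u @ w2) = ?A @ [?p @ u @ ?q] @ ?B" using pcs_P[OF pu(3) allu] .
  have sv: "splitP (PP e) (w1 @ v @ w2) = ?A @ [?p @ v @ ?q] @ ?B" using pcs_P[OF pu(4) allv] .
  have pq: "pure e ?p" "pure e ?q" using last_piece_pure hd_piece_pure w by auto
  have rel: "(?p @ v @ ?q, ?p @ u @ ?q) \<in> PO e" using po pq by blast
  show ?thesis
  proof (rule mult_replace[where I="F ?A + F ?B" and J="{#?p @ u @ ?q#}" and K="{#?p @ v @ ?q#}"])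
    show "{#?p @ u @ ?q#} \<noteq> {#}" by simp
    show "\<forall>k\<in>#{#?p @ v @ ?q#}. \<exists>j\<in>#{#?p @ u @ ?q#}. (k, j) \<in> PO e" using rel by simp
    show "pcs (PP e) (w1 @ v @ w2) = F ?A + F ?B + {#?p @ v @ ?q#}"
      unfolding pcs_def sv using pu(4) by (simp add: F_append F_single F_Cons_ne F_Cons_Nil)
    show "pcs (PP e) (w1 @ u @ w2) = F ?A + F ?B + {#?p @ u @ ?q#}"
      unfolding pcs_def su using pu(3) by (simp add: F_append F_single F_Cons_ne F_Cons_Nil)
  qed
qed

lemma step_external:
  assumes w: "w1 \<in> lists X" "w2 \<in> lists X" and cd: "c \<in> X" "d \<in> X" "PP e c \<or> PP e d"
    and v: "v \<noteq> []" "\<forall>n\<in>set v. \<not> PP e n"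
  shows "(pcs (PP e) (w1 @ v @ w2), pcs (PP e) (w1 @ [c, d] @ w2)) \<in> mult (PO e)"
proof -
  let ?A = "butlast (splitP (PP e) w1)" and ?p = "last (splitP (PP e) w1)"
    and ?q = "hd (splitP (PP e) w2)" and ?B = "tl (splitP (PP e) w2)"
  have pq: "pure e ?p" "pure e ?q" using last_piece_pure hd_piece_pure w by auto
  have new: "pcs (PP e) (w1 @ v @ w2) = F ?A + F [?p] + F [?q] + F ?B"
  proof -
    have "pcs (PP e) (w1 @ v @ w2) = F (splitP (PP e) w1) + F (splitP (PP e) w2)"
      using pcs_noP[OF v] unfolding pcs_def by simp
    also have "\<dots> = F (?A @ [?p]) + F (?q # ?B)" using split_last[of "PP e" w1] split_hd[of "PP e" w2] by simp
    also have "\<dots> = F ?A + F [?p] + F [?q] + F ?B" by (simp add: F_append F_Cons[of ?q ?B])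
    finally show ?thesis .
  qed
  consider "PP e c" "PP e d" | "PP e c" "\<not> PP e d" | "\<not> PP e c" "PP e d" using cd(3) by blast
  then show ?thesis
  proof cases
    case 1
    have s: "splitP (PP e) (w1 @ [c, d] @ w2) = ?A @ [?p @ [c, d] @ ?q] @ ?B"
      using pcs_P[of "[c, d]" "PP e" w1 w2] 1 by simp
    have "pure e [c, d]" using cd(1,2) 1 unfolding pure_def by simp
    then have pb: "pure e (?p @ [c, d] @ ?q)" using pq pure_append by blast
    show ?thesis
    proof (rule mult_replace[where I="F ?A + F ?B" and J="{#?p @ [c, d] @ ?q#}" and K="F [?p] + F [?q]"])
      show "{#?p @ [c, d] @ ?q#} \<noteq> {#}" by simp
      show "\<forall>k\<in>#F [?p] + F [?q]. \<exists>j\<in>#{#?p @ [c, d] @ ?q#}. (k, j) \<in> PO e"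
      proof
        fix k assume "k \<in># F [?p] + F [?q]"
        then have "k = ?p \<or> k = ?q" using F_single_mem by auto
        then have "(k, ?p @ [c, d] @ ?q) \<in> PO e"
        proof
          assume "k = ?p" then show ?thesis using PO_factor[OF pb, of "[]" ?p "[c, d] @ ?q"] by simp
        next
          assume "k = ?q" then show ?thesis using PO_factor[OF pb, of "?p @ [c, d]" ?q "[]"] by simp
        qed
        then show "\<exists>j\<in>#{#?p @ [c, d] @ ?q#}. (k, j) \<in> PO e" by simp
      qed
      show "pcs (PP e) (w1 @ v @ w2) = F ?A + F ?B + (F [?p] + F [?q])" using new by (simp add: add_ac)
      show "pcs (PP e) (w1 @ [c, d] @ w2) = F ?A + F ?B + {#?p @ [c, d] @ ?q#}"
        unfolding pcs_def s by (simp add: F_append F_single F_Cons_ne F_Cons_Nil)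
    qed
  next
    case 2
    have s: "splitP (PP e) (w1 @ [c, d] @ w2) = ?A @ [?p @ [c]] @ [?q] @ ?B"
      using pcs_Pn[of "PP e" c d w1 w2] 2 by simp
    have "pure e [c]" using cd(1) 2 unfolding pure_def by simp
    then have pb: "pure e (?p @ [c])" using pq pure_append by blast
    show ?thesis
    proof (rule mult_replace[where I="F ?A + F [?q] + F ?B" and J="{#?p @ [c]#}" and K="F [?p]"])
      show "{#?p @ [c]#} \<noteq> {#}" by simp
      show "\<forall>k\<in>#F [?p]. \<exists>j\<in>#{#?p @ [c]#}. (k, j) \<in> PO e"
        using PO_factor[OF pb, of "[]" ?p "[c]"] F_single_mem by auto
      show "pcs (PP e) (w1 @ v @ w2) = F ?A + F [?q] + F ?B + F [?p]" using new by (simp add: add_ac)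
      show "pcs (PP e) (w1 @ [c, d] @ w2) = F ?A + F [?q] + F ?B + {#?p @ [c]#}"
        unfolding pcs_def s by (simp add: F_append F_single F_Cons_ne F_Cons_Nil F_Cons[of ?q ?B] add_ac)
    qed
  next
    case 3
    have s: "splitP (PP e) (w1 @ [c, d] @ w2) = ?A @ [?p] @ [d # ?q] @ ?B"
      using pcs_nP[of "PP e" c d w1 w2] 3 by simp
    have "pure e [d]" using cd(2) 3 unfolding pure_def by simp
    then have pb: "pure e (d # ?q)" using pq pure_append[of e "[d]" ?q] by simp
    show ?thesis
    proof (rule mult_replace[where I="F ?A + F [?p] + F ?B" and J="{#d # ?q#}" and K="F [?q]"])
      show "{#d # ?q#} \<noteq> {#}" by simp
      show "\<forall>k\<in>#F [?q]. \<exists>j\<in>#{#d # ?q#}. (k, j) \<in> PO e"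
        using PO_factor[OF pb, of "[d]" ?q "[]"] F_single_mem by auto
      show "pcs (PP e) (w1 @ v @ w2) = F ?A + F [?p] + F ?B + F [?q]" using new by (simp add: add_ac)
      show "pcs (PP e) (w1 @ [c, d] @ w2) = F ?A + F [?p] + F ?B + {#d # ?q#}"
        unfolding pcs_def s by (simp add: F_append F_single F_Cons_ne F_Cons_Nil F_Cons[of ?p "(d # ?q) # ?B"] add_ac)
    qed
  qed
qed

lemma pcs_same:
  assumes "u \<noteq> []" "\<forall>n\<in>set u. cls n \<noteq> e" "v \<noteq> []" "\<forall>n\<in>set v. cls n \<noteq> e"
  shows "pcs (PP e) (w1 @ v @ w2) = pcs (PP e) (w1 @ u @ w2)"
  using pcs_noP[of u "PP e" w1 w2] pcs_noP[of v "PP e" w1 w2] assms by simp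

theorem noeth_Rn: "rw_noetherian X Rn"
  unfolding rw_noetherian_def
proof
  assume "\<exists>c :: nat \<Rightarrow> nat list. \<forall>i. (c i, c (Suc i)) \<in> rw_step X Rn"
  then obtain c :: "nat \<Rightarrow> nat list" where c: "\<forall>i. (c i, c (Suc i)) \<in> rw_step X Rn" by blast
  define Q where "Q i t \<longleftrightarrow> c i = fst t @ fst (snd t) @ snd (snd (snd t)) \<and> c (Suc i) = fst t @ fst (snd (snd t)) @ snd (snd (snd t))
     \<and> (fst (snd t), fst (snd (snd t))) \<in> Rn \<and> fst t \<in> lists X \<and> snd (snd (snd t)) \<in> lists X" for i and t :: "nat list \<times> nat list \<times> nat list \<times> nat list"
  have "\<forall>i. \<exists>t. Q i t"
  proof
    fix i
    obtain w1 u v w2 where "c i = w1 @ u @ w2" "c (Suc i) = w1 @ v @ w2" "(u, v) \<in> Rn" "w1 \<in> lists X" "w2 \<in> lists X"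
      using c unfolding rw_step_def by blast
    then have "Q i (w1, u, v, w2)" unfolding Q_def by simp
    then show "\<exists>t. Q i t" by blast
  qed
  then obtain T where T: "\<forall>i. Q i (T i)" using choice by blast
  define W1 where "W1 i = fst (T i)" for i
  define U where "U i = fst (snd (T i))" for i
  define V where "V i = fst (snd (snd (T i)))" for i
  define W2 where "W2 i = snd (snd (snd (T i)))" for i
  have st: "c i = W1 i @ U i @ W2 i" "c (Suc i) = W1 i @ V i @ W2 i" "(U i, V i) \<in> Rn" "W1 i \<in> lists X" "W2 i \<in> lists X" for i
  proof -
    have "Q i (T i)" using T by blast
    then show "c i = W1 i @ U i @ W2 i" "c (Suc i) = W1 i @ V i @ W2 i" "(U i, V i) \<in> Rn" "W1 i \<in> lists X" "W2 i \<in> lists X"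
      unfolding Q_def W1_def U_def V_def W2_def by blast+
  qed
  have Uok: "U i \<in> lists X" "U i \<noteq> []" for i
  proof -
    have "(U i, V i) \<in> Rn" by (rule st(3))
    then show "U i \<in> lists X" "U i \<noteq> []" using Rn_ok unfolding rules_ok_def by blast+
  qed
  define sr where "sr i = Max ((\<lambda>n. rk (cls n)) ` set (U i))" for i
  have fin_set: "finite ((\<lambda>n. rk (cls n)) ` set (U i))" "(\<lambda>n. rk (cls n)) ` set (U i) \<noteq> {}" for i
    using Uok by auto
  have sr_ge: "n \<in> set (U i) \<Longrightarrow> rk (cls n) \<le> sr i" for n i unfolding sr_def using fin_set by simp
  have sr_ex: "\<exists>n\<in>set (U i). rk (cls n) = sr i" for i
  proof -
    have "sr i \<in> (\<lambda>n. rk (cls n)) ` set (U i)" unfolding sr_def by (rule Max_in[OF fin_set(1) fin_set(2)])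
    then obtain n where "n \<in> set (U i)" "sr i = rk (cls n)" by (rule imageE)
    then show ?thesis by (intro bexI[of _ n]) simp_all
  qed
  have clsE: "n \<in> X \<Longrightarrow> cls n \<in> E" for n using letter okab_def by blast
  let ?Rs = "rk ` E"
  have finRs: "finite ?Rs" using finite_E by simp
  have sr_mem: "sr i \<in> ?Rs" for i
  proof -
    obtain n where "n \<in> set (U i)" "rk (cls n) = sr i" using sr_ex by blast
    then show ?thesis using clsE Uok by (metis image_eqI in_listsD)
  qed
  define Inf where "Inf = {r \<in> ?Rs. infinite {i. sr i = r}}"
  have "Inf \<noteq> {}"
  proof
    assume "Inf = {}"
    then have "\<forall>r\<in>?Rs. finite {i. sr i = r}" unfolding Inf_def by blast
    then have "finite (\<Union>r\<in>?Rs. {i. sr i = r})" using finRs by blast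
    moreover have "(\<Union>r\<in>?Rs. {i. sr i = r}) = UNIV" using sr_mem by blast
    ultimately show False by simp
  qed
  moreover have finInf: "finite Inf" using finRs unfolding Inf_def by simp
  ultimately have r0: "Max Inf \<in> Inf" using Max_in by blast
  define r0 where "r0 = Max Inf"
  have r0R: "r0 \<in> ?Rs" "infinite {i. sr i = r0}" using r0 unfolding r0_def Inf_def by auto
  have big: "finite {i. sr i = r}" if "r \<in> ?Rs" "r0 < r" for r
  proof (rule ccontr)
    assume "infinite {i. sr i = r}"
    then have "r \<in> Inf" using that unfolding Inf_def by blast
    then have "r \<le> r0" unfolding r0_def using Max_ge finInf by blast
    then show False using that by simp
  qed
  have "finite (\<Union>r\<in>{r \<in> ?Rs. r0 < r}. {i. sr i = r})" using big finRs by auto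
  then obtain N where N: "\<forall>i\<in>(\<Union>r\<in>{r \<in> ?Rs. r0 < r}. {i. sr i = r}). i < N"
    using finite_nat_set_iff_bounded by blast
  have le: "i \<ge> N \<Longrightarrow> sr i \<le> r0" for i
  proof (rule ccontr)
    assume "i \<ge> N" "\<not> sr i \<le> r0"
    then have "i \<in> (\<Union>r\<in>{r \<in> ?Rs. r0 < r}. {i. sr i = r})" using sr_mem by auto
    then have "i < N" by (rule bspec[OF N])
    then show False using \<open>i \<ge> N\<close> by simp
  qed
  obtain e0 where e0: "e0 \<in> E" "rk e0 = r0" using r0R by blast
  define M where "M i = pcs (PP e0) (c i)" for i
  have key: "(sr i = r0 \<longrightarrow> (M (Suc i), M i) \<in> mult (PO e0)) \<and> (sr i < r0 \<longrightarrow> M (Suc i) = M i)" for i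
  proof -
    from rule_cases[OF st(3)[of i]] show ?thesis
    proof
      assume "\<exists>e\<in>E. pure e (U i) \<and> pure e (V i) \<and> U i \<noteq> [] \<and> V i \<noteq> [] \<and>
          (\<forall>p q. pure e p \<longrightarrow> pure e q \<longrightarrow> (p @ V i @ q, p @ U i @ q) \<in> PO e)"
      then obtain e where e: "e \<in> E" "pure e (U i)" "pure e (V i)" "U i \<noteq> []" "V i \<noteq> []"
          "\<forall>p q. pure e p \<longrightarrow> pure e q \<longrightarrow> (p @ V i @ q, p @ U i @ q) \<in> PO e" by blast
      have "sr i = rk e" using sr_ex[of i] e(2) unfolding pure_def by auto
      show ?thesis
      proof (cases "e = e0")
        case True
        then have "(M (Suc i), M i) \<in> mult (PO e0)" unfolding M_def st(2)[of i] st(1)[of i]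
          using step_internal[OF st(4,5) e(2-6)] by simp
        moreover have "sr i = r0" using \<open>sr i = rk e\<close> True e0(2) by simp
        ultimately show ?thesis by simp
      next
        case False
        have "sr i \<noteq> r0" using \<open>sr i = rk e\<close> e0 rk_inj e(1) False by metis
        moreover have "M (Suc i) = M i" unfolding M_def st(2)[of i] st(1)[of i]
          by (rule pcs_same) (use e False in \<open>auto simp: pure_def\<close>)
        ultimately show ?thesis by simp
      qed
    next
      assume "\<exists>a b. U i = [a, b] \<and> a \<in> X \<and> b \<in> X \<and> V i \<in> lists X \<and> V i \<noteq> [] \<and>
          (\<forall>n\<in>set (V i). rk (cls n) < max (rk (cls a)) (rk (cls b)))"
      then obtain a b where x: "U i = [a, b]" "a \<in> X" "b \<in> X" "V i \<in> lists X" "V i \<noteq> []"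
        "\<forall>n\<in>set (V i). rk (cls n) < max (rk (cls a)) (rk (cls b))" by blast
      have sri: "sr i = max (rk (cls a)) (rk (cls b))" unfolding sr_def x(1) by simp
      show ?thesis
      proof (cases "sr i = r0")
        case True
        have vn: "\<forall>n\<in>set (V i). cls n \<noteq> e0" using x(6) sri True e0(2) by auto
        have "cls a = e0 \<or> cls b = e0"
        proof -
          have "rk (cls a) = r0 \<or> rk (cls b) = r0" using sri True by (simp add: max_def split: if_splits)
          then show ?thesis using rk_inj clsE x(2,3) e0 by metis
        qed
        then have "(M (Suc i), M i) \<in> mult (PO e0)" unfolding M_def st(2)[of i] st(1)[of i] x(1)
          using step_external[OF st(4,5) x(2,3) _ x(5) vn] by simp
        then show ?thesis using True by simp
      next
        case False
        have "sr i < r0 \<longrightarrow> M (Suc i) = M i"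
        proof
          assume lt: "sr i < r0"
          have "cls a \<noteq> e0" "cls b \<noteq> e0" using lt sri e0(2) by auto
          moreover have "\<forall>n\<in>set (V i). cls n \<noteq> e0" using x(6) sri lt e0(2) by auto
          ultimately show "M (Suc i) = M i" unfolding M_def st(2)[of i] st(1)[of i]
            by (intro pcs_same) (use x in auto)
        qed
        then show ?thesis using False by simp
      qed
    qed
  qed
  have stp: "\<forall>i\<ge>N. M (Suc i) = M i \<or> (M (Suc i), M i) \<in> mult (PO e0)"
  proof (intro allI impI)
    fix i assume "N \<le> i"
    then have "sr i \<le> r0" using le by blast
    then show "M (Suc i) = M i \<or> (M (Suc i), M i) \<in> mult (PO e0)" using key[of i] by linarith
  qed
  have inf: "\<forall>n. \<exists>i\<ge>n. (M (Suc i), M i) \<in> mult (PO e0)"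
  proof
    fix n
    obtain i where "i \<ge> n" "sr i = r0" using r0R(2) unfolding infinite_nat_iff_unbounded_le by blast
    then show "\<exists>i\<ge>n. (M (Suc i), M i) \<in> mult (PO e0)" using key by blast
  qed
  have tr: "trans (mult (PO e0))" unfolding mult_def by (rule trans_trancl)
  show False using desc_contra[OF wf_mult[OF wf_PO[OF e0(1)]] tr stp inf] .
qed

end


context rsgp begin

lemma no_step_outside: "u \<notin> lists X \<or> u = [] \<Longrightarrow> (u, v) \<in> (rw_step X Rn)\<^sup>* \<Longrightarrow> v = u"
proof -
  assume a: "u \<notin> lists X \<or> u = []" and b: "(u, v) \<in> (rw_step X Rn)\<^sup>*"
  from b show "v = u"
  proof (rule converse_rtranclE)
    assume "u = v" then show ?thesis by simp
  next
    fix y assume s: "(u, y) \<in> rw_step X Rn"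
    have "u \<in> lists X" "u \<noteq> []" using rw_step_lists[OF s Rn_ok] by auto
    then show ?thesis using a by blast
  qed
qed

lemma confl: "rw_confluent X Rn"
  unfolding rw_confluent_def
proof (intro allI impI, elim conjE)
  fix u v v' assume uv: "(u, v) \<in> (rw_step X Rn)\<^sup>*" and uv': "(u, v') \<in> (rw_step X Rn)\<^sup>*"
  show "\<exists>w. (v, w) \<in> (rw_step X Rn)\<^sup>* \<and> (v', w) \<in> (rw_step X Rn)\<^sup>*"
  proof (cases "u \<in> lists X \<and> u \<noteq> []")
    case False
    then have "v = u" "v' = u" using no_step_outside uv uv' by blast+
    then show ?thesis by blast
  next
    case True
    obtain n where n: "(v, n) \<in> (rw_step X Rn)\<^sup>*" "irred X Rn n" using exists_irred noeth_Rn by blast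
    obtain n' where n': "(v', n') \<in> (rw_step X Rn)\<^sup>*" "irred X Rn n'" using exists_irred noeth_Rn by blast
    have un: "(u, n) \<in> (rw_step X Rn)\<^sup>*" "(u, n') \<in> (rw_step X Rn)\<^sup>*" using uv uv' n n' by auto
    have l: "n \<in> lists X \<and> n \<noteq> []" "n' \<in> lists X \<and> n' \<noteq> []"
      using rw_steps_lists[OF un(1) Rn_ok] rw_steps_lists[OF un(2) Rn_ok] True by auto
    have "val n = val n'" using steps_val_X[OF un(1)] steps_val_X[OF un(2)] by simp
    then have "n = n'" using irred_NF l n(2) n'(2) by metis
    then show ?thesis using n n' by blast
  qed
qed

lemma conv_lists:
  assumes "(w1, z) \<in> (rw_step X Rn \<union> (rw_step X Rn)\<inverse>)\<^sup>*" "w1 \<in> lists X" "w1 \<noteq> []"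
  shows "z \<in> lists X \<and> z \<noteq> [] \<and> val z = val w1"
  using assms(1)
proof (induction rule: rtrancl_induct)
  case base then show ?case using assms by simp
next
  case (step y z)
  from step(2) show ?case
  proof
    assume s: "(y, z) \<in> rw_step X Rn"
    then show ?thesis using step(3) rw_step_lists[OF s Rn_ok] step_val_X[OF s] by simp
  next
    assume "(y, z) \<in> (rw_step X Rn)\<inverse>"
    then have s: "(z, y) \<in> rw_step X Rn" by simp
    then show ?thesis using step(3) rw_step_lists[OF s Rn_ok] step_val_X[OF s] by simp
  qed
qed

lemma pres: "pres_map X Rn S f val"
  unfolding pres_map_def
proof (intro conjI ballI)
  fix w assume "w \<in> lists X - {[]}" then show "val w \<in> S" using val_S by simp
next
  fix w1 w2 assume "w1 \<in> lists X - {[]}" "w2 \<in> lists X - {[]}"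
  then show "val (w1 @ w2) = f (val w1) (val w2)" using val_append by simp
next
  show "S \<subseteq> val ` (lists X - {[]})"
  proof
    fix y assume "y \<in> S"
    then have "NF y \<in> lists X - {[]}" "val (NF y) = y" using NF by auto
    then show "y \<in> val ` (lists X - {[]})" by (metis image_eqI)
  qed
next
  fix w1 w2 assume w: "w1 \<in> lists X - {[]}" "w2 \<in> lists X - {[]}"
  show "(val w1 = val w2) = ((w1, w2) \<in> (rw_step X Rn \<union> (rw_step X Rn)\<inverse>)\<^sup>*)"
  proof
    assume eq: "val w1 = val w2"
    obtain n1 where n1: "(w1, n1) \<in> (rw_step X Rn)\<^sup>*" "irred X Rn n1" using exists_irred noeth_Rn by blast
    obtain n2 where n2: "(w2, n2) \<in> (rw_step X Rn)\<^sup>*" "irred X Rn n2" using exists_irred noeth_Rn by blast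
    have l: "n1 \<in> lists X \<and> n1 \<noteq> []" "n2 \<in> lists X \<and> n2 \<noteq> []"
      using rw_steps_lists[OF n1(1) Rn_ok] rw_steps_lists[OF n2(1) Rn_ok] w by auto
    have "val n1 = val n2" using steps_val_X[OF n1(1)] steps_val_X[OF n2(1)] eq by simp
    then have "n1 = n2" using irred_NF l n1(2) n2(2) by metis
    have c1: "(w1, n1) \<in> (rw_step X Rn \<union> (rw_step X Rn)\<inverse>)\<^sup>*" using steps_conv n1(1) by blast
    have c2: "(n1, w2) \<in> (rw_step X Rn \<union> (rw_step X Rn)\<inverse>)\<^sup>*"
      using conv_sym[OF steps_conv[OF n2(1)]] \<open>n1 = n2\<close> by simp
    show "(w1, w2) \<in> (rw_step X Rn \<union> (rw_step X Rn)\<inverse>)\<^sup>*" using c1 c2 by (rule rtrancl_trans)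
  next
    assume "(w1, w2) \<in> (rw_step X Rn \<union> (rw_step X Rn)\<inverse>)\<^sup>*"
    then show "val w1 = val w2" using conv_lists w by auto
  qed
qed

theorem fcp: "has_finite_complete_presentation S f"
proof -
  have "finite_complete_rws X Rn"
    unfolding finite_complete_rws_def
    using finite_X finite_Rn Rn_ok noeth_Rn confl unfolding rules_ok_def by blast
  then show ?thesis unfolding has_finite_complete_presentation_def presents_iff using pres by blast
qed

end

theorem theorem1p1:
  fixes S :: "'a set" and f :: "'a \<Rightarrow> 'a \<Rightarrow> 'a"
  assumes "regular_semigroup S f"
    and "finite {I. left_ideal S f I}"
    and "finite {I. right_ideal S f I}"
    and "\<forall>H. maximal_subgroup S f H \<longrightarrow> has_finite_complete_presentation H f"
  shows "has_finite_complete_presentation S f"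
proof -
  interpret rsgp S f
    by (unfold_locales) (use assms in auto)
  show ?thesis by (rule fcp)
qed


end
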